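(* Let $K$ be a field which is an $\mathscr A$-algebra, $\zeta$ the image of $q$, and suppose $m\ge n\ge2$. Then $\operatorname{Ann}_{\mathfrak B_n(-\zeta^{2m+1},\zeta)}(V_K^{\otimes n})\subseteq B^{(1)}$, where $\operatorname{Ann}$ denotes the set of $x\in\mathfrak B_n(-\zeta^{2m+1},\zeta)$ with $vx=0$ for all $v\in V_K^{\otimes n}$.
   Context: Let $q$ be an indeterminate, $\mathscr A=\mathbb Z[q,q^{-1}]$. $\mathfrak B_n(-q^{2m+1},q)_{\mathscr A}$ is the unital $\mathscr A$-algebra generated by invertible $T_i$ and $E_i$ ($1\le i\le n-1$) with relations $T_i-T_i^{-1}=z(1-E_i)$; $E_i^2=xE_i$; $T_iT_{i+1}T_i=T_{i+1}T_iT_{i+1}$; $T_iT_j=T_jT_i$ ($|i-j|>1$); $E_iE_{i+1}E_i=E_i$, $E_{i+1}E_iE_{i+1}=E_{i+1}$; $T_iT_{i+1}E_i=E_{i+1}E_i$, $T_{i+1}T_iE_{i+1}=E_iE_{i+1}$; $E_iT_i=T_iE_i=r^{-1}E_i$; $E_iT_{i+1}E_i=rE_i$, $E_{i+1}T_iE_{i+1}=rE_{i+1}$; with $r=-q^{2m+1}$, $z=q-q^{-1}$, $x=1-\sum_{i=-m}^mq^{2i}$; $\mathfrak B_n(-\zeta^{2m+1},\zeta)=\mathfrak B_n(-q^{2m+1},q)_{\mathscr A}\otimes_{\mathscr A}K$. $V_K$ has basis $v_1,\dots,v_{2m}$, $i'=2m+1-i$, $\rho=(m,\dots,1,-1,\dots,-m)$,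 $\epsilon_i=\operatorname{sign}\rho_i$, $M_{i,j}v_k=\delta_{jk}v_i$; $\beta'=\sum_i(qM_{i,i}\otimes M_{i,i}+q^{-1}M_{i,i'}\otimes M_{i',i})+\sum_{i\ne j,j'}M_{i,j}\otimes M_{j,i}+(q-q^{-1})\sum_{i<j}(M_{i,i}\otimes M_{j,j}-q^{\rho_j-\rho_i}\epsilon_i\epsilon_jM_{i,j'}\otimes M_{i',j})$, $\gamma'=\sum_{i,j}q^{\rho_j-\rho_i}\epsilon_i\epsilon_jM_{i,j'}\otimes M_{i',j}$ (with $q$ specialized to $\zeta$); the right action of $\mathfrak B_n(-\zeta^{2m+1},\zeta)$ on $V_K^{\otimes n}$ is given by $T_i$ acting as $\beta'$ and $E_i$ as $\gamma'$ on tensor positions $i,i+1$. $B^{(1)}$ is the two-sided ideal of $\mathfrak B_n(-\zeta^{2m+1},\zeta)$ generated by $E_1$. *)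

theory Defs
  imports Main
begin

datatype gen = T nat | Tinv nat | E nat

fun gidx :: "gen \<Rightarrow> nat" where
  "gidx (T i) = i" | "gidx (Tinv i) = i" | "gidx (E i) = i"

datatype 'k bexp = Sc 'k | G gen | Add "'k bexp" "'k bexp" | Mul "'k bexp" "'k bexp"

fun wf_bexp :: "nat \<Rightarrow> 'k bexp \<Rightarrow> bool" where
  "wf_bexp n (Sc c) = True"
| "wf_bexp n (G g) = (1 \<le> gidx g \<and> gidx g \<le> n - 1)"
| "wf_bexp n (Add a b) = (wf_bexp n a \<and> wf_bexp n b)"
| "wf_bexp n (Mul a b) = (wf_bexp n a \<and> wf_bexp n b)"

abbreviation Sub :: "'k::field bexp \<Rightarrow> 'k bexp \<Rightarrow> 'k bexp" where
  "Sub a b \<equiv> Add a (Mul (Sc (-1)) b)"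

definition par_r :: "nat \<Rightarrow> 'k::field \<Rightarrow> 'k" where
  "par_r m \<zeta> = - (\<zeta> ^ (2*m+1))"

definition par_z :: "'k::field \<Rightarrow> 'k" where
  "par_z \<zeta> = \<zeta> - inverse \<zeta>"

definition par_x :: "nat \<Rightarrow> 'k::field \<Rightarrow> 'k" where
  "par_x m \<zeta> = 1 - (\<Sum>i\<in>{-int m..int m}. \<zeta> powi (2*i))"

section \<open>The BMW algebra B_n(-zeta^(2m+1), zeta) over K, as the congruence on
  expressions generated by the unital associative K-algebra axioms and the defining relations\<close>

inductive bmw_eq :: "nat \<Rightarrow> nat \<Rightarrow> 'k::field \<Rightarrow> 'k bexp \<Rightarrow> 'k bexp \<Rightarrow> bool"
  for n m \<zeta> where
  refl: "bmw_eq n m \<zeta> a a"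
| sym: "bmw_eq n m \<zeta> a b \<Longrightarrow> bmw_eq n m \<zeta> b a"
| trans: "bmw_eq n m \<zeta> a b \<Longrightarrow> bmw_eq n m \<zeta> b c \<Longrightarrow> bmw_eq n m \<zeta> a c"
| cong_add: "bmw_eq n m \<zeta> a a' \<Longrightarrow> bmw_eq n m \<zeta> b b' \<Longrightarrow> bmw_eq n m \<zeta> (Add a b) (Add a' b')"
| cong_mul: "bmw_eq n m \<zeta> a a' \<Longrightarrow> bmw_eq n m \<zeta> b b' \<Longrightarrow> bmw_eq n m \<zeta> (Mul a b) (Mul a' b')"
| add_assoc: "bmw_eq n m \<zeta> (Add (Add a b) c) (Add a (Add b c))"
| add_comm: "bmw_eq n m \<zeta> (Add a b) (Add b a)"
| add_zero: "bmw_eq n m \<zeta> (Add (Sc 0) a) a"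
| add_neg: "bmw_eq n m \<zeta> (Sub a a) (Sc 0)"
| mul_assoc: "bmw_eq n m \<zeta> (Mul (Mul a b) c) (Mul a (Mul b c))"
| mul_one_l: "bmw_eq n m \<zeta> (Mul (Sc 1) a) a"
| mul_one_r: "bmw_eq n m \<zeta> (Mul a (Sc 1)) a"
| distrib_l: "bmw_eq n m \<zeta> (Mul a (Add b c)) (Add (Mul a b) (Mul a c))"
| distrib_r: "bmw_eq n m \<zeta> (Mul (Add a b) c) (Add (Mul a c) (Mul b c))"
| sc_add: "bmw_eq n m \<zeta> (Add (Sc c) (Sc d)) (Sc (c + d))"
| sc_mul: "bmw_eq n m \<zeta> (Mul (Sc c) (Sc d)) (Sc (c * d))"
| sc_central: "bmw_eq n m \<zeta> (Mul (Sc c) a) (Mul a (Sc c))"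
| inv_l: "1 \<le> i \<Longrightarrow> i \<le> n - 1 \<Longrightarrow> bmw_eq n m \<zeta> (Mul (G (T i)) (G (Tinv i))) (Sc 1)"
| inv_r: "1 \<le> i \<Longrightarrow> i \<le> n - 1 \<Longrightarrow> bmw_eq n m \<zeta> (Mul (G (Tinv i)) (G (T i))) (Sc 1)"
| skein: "1 \<le> i \<Longrightarrow> i \<le> n - 1 \<Longrightarrow>
    bmw_eq n m \<zeta> (Sub (G (T i)) (G (Tinv i))) (Mul (Sc (par_z \<zeta>)) (Sub (Sc 1) (G (E i))))"
| E_sq: "1 \<le> i \<Longrightarrow> i \<le> n - 1 \<Longrightarrow>
    bmw_eq n m \<zeta> (Mul (G (E i)) (G (E i))) (Mul (Sc (par_x m \<zeta>)) (G (E i)))"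
| braid: "1 \<le> i \<Longrightarrow> i + 1 \<le> n - 1 \<Longrightarrow>
    bmw_eq n m \<zeta> (Mul (Mul (G (T i)) (G (T (i+1)))) (G (T i)))
                   (Mul (Mul (G (T (i+1))) (G (T i))) (G (T (i+1))))"
| far_comm: "1 \<le> i \<Longrightarrow> i \<le> n - 1 \<Longrightarrow> 1 \<le> j \<Longrightarrow> j \<le> n - 1 \<Longrightarrow> i + 1 < j \<or> j + 1 < i \<Longrightarrow>
    bmw_eq n m \<zeta> (Mul (G (T i)) (G (T j))) (Mul (G (T j)) (G (T i)))"
| EEE1: "1 \<le> i \<Longrightarrow> i + 1 \<le> n - 1 \<Longrightarrow>
    bmw_eq n m \<zeta> (Mul (Mul (G (E i)) (G (E (i+1)))) (G (E i))) (G (E i))"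
| EEE2: "1 \<le> i \<Longrightarrow> i + 1 \<le> n - 1 \<Longrightarrow>
    bmw_eq n m \<zeta> (Mul (Mul (G (E (i+1))) (G (E i))) (G (E (i+1)))) (G (E (i+1)))"
| TTE1: "1 \<le> i \<Longrightarrow> i + 1 \<le> n - 1 \<Longrightarrow>
    bmw_eq n m \<zeta> (Mul (Mul (G (T i)) (G (T (i+1)))) (G (E i))) (Mul (G (E (i+1))) (G (E i)))"
| TTE2: "1 \<le> i \<Longrightarrow> i + 1 \<le> n - 1 \<Longrightarrow>
    bmw_eq n m \<zeta> (Mul (Mul (G (T (i+1))) (G (T i))) (G (E (i+1)))) (Mul (G (E i)) (G (E (i+1))))"
| ET: "1 \<le> i \<Longrightarrow> i \<le> n - 1 \<Longrightarrow>
    bmw_eq n m \<zeta> (Mul (G (E i)) (G (T i))) (Mul (Sc (inverse (par_r m \<zeta>))) (G (E i)))"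
| TE: "1 \<le> i \<Longrightarrow> i \<le> n - 1 \<Longrightarrow>
    bmw_eq n m \<zeta> (Mul (G (T i)) (G (E i))) (Mul (Sc (inverse (par_r m \<zeta>))) (G (E i)))"
| ETE1: "1 \<le> i \<Longrightarrow> i + 1 \<le> n - 1 \<Longrightarrow>
    bmw_eq n m \<zeta> (Mul (Mul (G (E i)) (G (T (i+1)))) (G (E i))) (Mul (Sc (par_r m \<zeta>)) (G (E i)))"
| ETE2: "1 \<le> i \<Longrightarrow> i + 1 \<le> n - 1 \<Longrightarrow>
    bmw_eq n m \<zeta> (Mul (Mul (G (E (i+1))) (G (T i))) (G (E (i+1)))) (Mul (Sc (par_r m \<zeta>)) (G (E (i+1))))"

section \<open>The two-sided ideal B^(1) generated by E_1 (as a set of expressions, closed under bmw_eq)\<close>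

inductive inB1 :: "nat \<Rightarrow> nat \<Rightarrow> 'k::field \<Rightarrow> 'k bexp \<Rightarrow> bool" for n m \<zeta> where
  gen: "wf_bexp n a \<Longrightarrow> wf_bexp n b \<Longrightarrow> inB1 n m \<zeta> (Mul (Mul a (G (E 1))) b)"
| add: "inB1 n m \<zeta> a \<Longrightarrow> inB1 n m \<zeta> b \<Longrightarrow> inB1 n m \<zeta> (Add a b)"
| resp: "inB1 n m \<zeta> a \<Longrightarrow> bmw_eq n m \<zeta> a b \<Longrightarrow> inB1 n m \<zeta> b"

(* basis vectors v_{w_1} \<otimes> ... \<otimes> v_{w_n}, indexed by words w of length n over {1..2m} *)
definition tbasis :: "nat \<Rightarrow> nat \<Rightarrow> nat list set" where
  "tbasis n m = {w. length w = n \<and> set w \<subseteq> {1..2*m}}"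

definition is_tvec :: "nat \<Rightarrow> nat \<Rightarrow> (nat list \<Rightarrow> 'k::zero) \<Rightarrow> bool" where
  "is_tvec n m v \<longleftrightarrow> (\<forall>w. w \<notin> tbasis n m \<longrightarrow> v w = 0)"

definition pr :: "nat \<Rightarrow> nat \<Rightarrow> nat" where
  "pr m i = 2*m + 1 - i"

definition rho :: "nat \<Rightarrow> nat \<Rightarrow> int" where  (* rho = (m,...,1,-1,...,-m) *)
  "rho m i = (if i \<le> m then int m + 1 - int i else int m - int i)"

definition eps :: "nat \<Rightarrow> nat \<Rightarrow> 'k::field" where
  "eps m i = (if i \<le> m then 1 else -1)"

(* matrix coefficient of beta': coefficient of v_c \<otimes> v_d in beta'(v_a \<otimes> v_b) *)
definition beta_c :: "nat \<Rightarrow> 'k::field \<Rightarrow> nat \<Rightarrow> nat \<Rightarrow> nat \<Rightarrow> nat \<Rightarrow> 'k" where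
  "beta_c m \<zeta> c d a b =
     (if c = d \<and> a = c \<and> b = c then \<zeta> else 0)
   + (if d = pr m c \<and> a = pr m c \<and> b = c then inverse \<zeta> else 0)
   + (if c \<noteq> d \<and> c \<noteq> pr m d \<and> a = d \<and> b = c then 1 else 0)
   + par_z \<zeta> * ((if c < d \<and> a = c \<and> b = d then 1 else 0)
       - (if c < b \<and> d = pr m c \<and> a = pr m b
          then \<zeta> powi (rho m b - rho m c) * eps m c * eps m b else 0))"

definition gamma_c :: "nat \<Rightarrow> 'k::field \<Rightarrow> nat \<Rightarrow> nat \<Rightarrow> nat \<Rightarrow> nat \<Rightarrow> 'k" where
  "gamma_c m \<zeta> c d a b =
     (if d = pr m c \<and> a = pr m b then \<zeta> powi (rho m b - rho m c) * eps m c * eps m b else 0)"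

(* operator with coefficients C acting on tensor positions i, i+1 (1-indexed) *)
definition two_site :: "nat \<Rightarrow> nat \<Rightarrow> (nat \<Rightarrow> nat \<Rightarrow> nat \<Rightarrow> nat \<Rightarrow> 'k::field) \<Rightarrow> nat
    \<Rightarrow> (nat list \<Rightarrow> 'k) \<Rightarrow> (nat list \<Rightarrow> 'k)" where
  "two_site n m C i v w =
     (if w \<in> tbasis n m then
        (\<Sum>a\<in>{1..2*m}. \<Sum>b\<in>{1..2*m}. C (w!(i-1)) (w!i) a b * v (w[i-1 := a, i := b]))
      else 0)"

(* right action  v \<mapsto> v\<cdot>g  of a generator; T_i^{-1} acts as beta' - z(1 - gamma'),
   which is forced by the relation T_i - T_i^{-1} = z(1 - E_i) *)
fun gen_act :: "nat \<Rightarrow> nat \<Rightarrow> 'k::field \<Rightarrow> gen \<Rightarrow> (nat list \<Rightarrow> 'k) \<Rightarrow> (nat list \<Rightarrow> 'k)" where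
  "gen_act n m \<zeta> (T i) v = two_site n m (beta_c m \<zeta>) i v"
| "gen_act n m \<zeta> (E i) v = two_site n m (gamma_c m \<zeta>) i v"
| "gen_act n m \<zeta> (Tinv i) v =
     (\<lambda>w. two_site n m (beta_c m \<zeta>) i v w - par_z \<zeta> * (v w - two_site n m (gamma_c m \<zeta>) i v w))"

(* right action v \<mapsto> v\<cdot>x of an algebra element; v\<cdot>(xy) = (v\<cdot>x)\<cdot>y *)
fun act :: "nat \<Rightarrow> nat \<Rightarrow> 'k::field \<Rightarrow> 'k bexp \<Rightarrow> (nat list \<Rightarrow> 'k) \<Rightarrow> (nat list \<Rightarrow> 'k)" where
  "act n m \<zeta> (Sc c) v = (\<lambda>w. c * v w)"
| "act n m \<zeta> (G g) v = gen_act n m \<zeta> g v"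
| "act n m \<zeta> (Add a b) v = (\<lambda>w. act n m \<zeta> a v w + act n m \<zeta> b v w)"
| "act n m \<zeta> (Mul a b) v = act n m \<zeta> b (act n m \<zeta> a v)"

definition in_Ann :: "nat \<Rightarrow> nat \<Rightarrow> 'k::field \<Rightarrow> 'k bexp \<Rightarrow> bool" where
  "in_Ann n m \<zeta> x \<longleftrightarrow> (\<forall>v. is_tvec n m v \<longrightarrow> act n m \<zeta> x v = (\<lambda>w. 0))"

end

theory Submission
  imports Defs
begin

locale Lc = fixes n m :: nat and \<zeta> :: "'k::field" begin

abbreviation beq where "beq \<equiv> bmw_eq n m \<zeta>"
abbreviation II where "II \<equiv> inB1 n m \<zeta>"

lemma bt[trans]: "beq a b \<Longrightarrow> beq b c \<Longrightarrow> beq a c" by (rule bmw_eq.trans)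
lemmas br = bmw_eq.refl
lemmas bs = bmw_eq.sym

lemma cml: "beq a a' \<Longrightarrow> beq (Mul a b) (Mul a' b)" by (rule bmw_eq.cong_mul, assumption, rule br)
lemma cmr: "beq b b' \<Longrightarrow> beq (Mul a b) (Mul a b')" by (rule bmw_eq.cong_mul, rule br, assumption)
lemma cal: "beq a a' \<Longrightarrow> beq (Add a b) (Add a' b)" by (rule bmw_eq.cong_add, assumption, rule br)
lemma car: "beq b b' \<Longrightarrow> beq (Add a b) (Add a b')" by (rule bmw_eq.cong_add, rule br, assumption)

lemma sc_comb: "beq (Add (Mul (Sc c) a) (Mul (Sc d) a)) (Mul (Sc (c+d)) a)"
proof -
  have "beq (Add (Mul (Sc c) a) (Mul (Sc d) a)) (Mul (Add (Sc c) (Sc d)) a)"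
    by (rule bs, rule bmw_eq.distrib_r)
  also have "beq \<dots> (Mul (Sc (c+d)) a)" by (rule cml, rule bmw_eq.sc_add)
  finally show ?thesis .
qed

lemma zero_mul: "beq (Mul (Sc 0) a) (Sc 0)"
proof -
  have "beq (Mul (Sc 0) a) (Mul (Sc (1 + -1)) a)" by simp (rule br)
  also have "beq \<dots> (Add (Mul (Sc 1) a) (Mul (Sc (-1)) a))" by (rule bs, rule sc_comb)
  also have "beq \<dots> (Sub a a)" by (rule cal, rule bmw_eq.mul_one_l)
  also have "beq \<dots> (Sc 0)" by (rule bmw_eq.add_neg)
  finally show ?thesis .
qed

lemma add_zero_r: "beq (Add a (Sc 0)) a"
  by (rule bt, rule bmw_eq.add_comm, rule bmw_eq.add_zero)

lemma ac4: "beq (Add (Add a b) (Add c d)) (Add (Add a c) (Add b d))"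
proof -
  have "beq (Add (Add a b) (Add c d)) (Add a (Add b (Add c d)))" by (rule bmw_eq.add_assoc)
  also have "beq \<dots> (Add a (Add (Add b c) d))" by (rule car, rule bs, rule bmw_eq.add_assoc)
  also have "beq \<dots> (Add a (Add (Add c b) d))" by (rule car, rule cal, rule bmw_eq.add_comm)
  also have "beq \<dots> (Add a (Add c (Add b d)))" by (rule car, rule bmw_eq.add_assoc)
  also have "beq \<dots> (Add (Add a c) (Add b d))" by (rule bs, rule bmw_eq.add_assoc)
  finally show ?thesis .
qed

lemma mul_zero: "beq (Mul a (Sc 0)) (Sc 0)"
  by (rule bt, rule bs, rule bmw_eq.sc_central, rule zero_mul)

lemma I_right: "II b \<Longrightarrow> wf_bexp n t \<Longrightarrow> II (Mul b t)"
proof (induction rule: inB1.induct)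
  case (gen a b)
  have 1: "II (Mul (Mul a (G (E 1))) (Mul b t))" by (rule inB1.gen) (use gen in auto)
  have 2: "beq (Mul (Mul a (G (E 1))) (Mul b t)) (Mul (Mul (Mul a (G (E 1))) b) t)"
    by (rule bs, rule bmw_eq.mul_assoc)
  show ?case by (rule inB1.resp[OF 1 2])
next
  case (add a b)
  then have 1: "II (Add (Mul a t) (Mul b t))" by (intro inB1.add) auto
  have 2: "beq (Add (Mul a t) (Mul b t)) (Mul (Add a b) t)" by (rule bs, rule bmw_eq.distrib_r)
  show ?case by (rule inB1.resp[OF 1 2])
next
  case (resp a b)
  then have "II (Mul a t)" by auto
  then show ?case by (rule inB1.resp[OF _ cml[OF resp(2)]])
qed

lemma I_left: "II b \<Longrightarrow> wf_bexp n t \<Longrightarrow> II (Mul t b)"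
proof (induction rule: inB1.induct)
  case (gen a b)
  have "II (Mul (Mul (Mul t a) (G (E 1))) b)" by (rule inB1.gen) (use gen in auto)
  moreover have "beq (Mul (Mul (Mul t a) (G (E 1))) b) (Mul t (Mul (Mul a (G (E 1))) b))"
    by (rule bt, rule cml, rule bmw_eq.mul_assoc, rule bmw_eq.mul_assoc)
  ultimately show ?case by (rule inB1.resp)
next
  case (add a b)
  then have 1: "II (Add (Mul t a) (Mul t b))" by (intro inB1.add) auto
  have 2: "beq (Add (Mul t a) (Mul t b)) (Mul t (Add a b))" by (rule bs, rule bmw_eq.distrib_l)
  show ?case by (rule inB1.resp[OF 1 2])
next
  case (resp a b)
  then have "II (Mul t a)" by auto
  then show ?case by (rule inB1.resp[OF _ cmr[OF resp(2)]])
qed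

lemma I_zero: "II (Sc 0)"
proof -
  have "II (Mul (Mul (Sc 0) (G (E 1))) (Sc 1))" by (rule inB1.gen) auto
  moreover have "beq (Mul (Mul (Sc 0) (G (E 1))) (Sc 1)) (Sc 0)"
    by (rule bt, rule bmw_eq.mul_one_r, rule zero_mul)
  ultimately show ?thesis by (rule inB1.resp)
qed

definition cg where "cg x y \<longleftrightarrow> (\<exists>b. II b \<and> beq x (Add y b))"

lemma cg_beq: "beq x y \<Longrightarrow> cg x y"
  unfolding cg_def
  by (rule exI[of _ "Sc 0"], rule conjI, rule I_zero, rule bt, assumption, rule bs, rule add_zero_r)

lemma cg_refl: "cg x x" by (rule cg_beq, rule br)

lemma cg_trans[trans]: "cg x y \<Longrightarrow> cg y z \<Longrightarrow> cg x z"
  unfolding cg_def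
proof (elim exE conjE)
  fix b b' assume *: "II b" "beq x (Add y b)" "II b'" "beq y (Add z b')"
  have "beq x (Add (Add z b') b)" by (rule bt, rule *(2), rule cal, rule *(4))
  also have "beq \<dots> (Add z (Add b' b))" by (rule bmw_eq.add_assoc)
  finally show "\<exists>b. II b \<and> beq x (Add z b)" using * by (intro exI[of _ "Add b' b"]) (auto intro: inB1.add)
qed

lemma cg_beq_trans[trans]: "cg x y \<Longrightarrow> beq y z \<Longrightarrow> cg x z"
  by (rule cg_trans, assumption, rule cg_beq)
lemma beq_cg_trans[trans]: "beq x y \<Longrightarrow> cg y z \<Longrightarrow> cg x z"
  by (rule cg_trans, rule cg_beq)

lemma cg_add: "cg x y \<Longrightarrow> cg x' y' \<Longrightarrow> cg (Add x x') (Add y y')"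
  unfolding cg_def
proof (elim exE conjE)
  fix b b' assume *: "II b" "beq x (Add y b)" "II b'" "beq x' (Add y' b')"
  have "beq (Add x x') (Add (Add y b) (Add y' b'))" by (rule bmw_eq.cong_add, fact, fact)
  also have "beq \<dots> (Add (Add y y') (Add b b'))" by (rule ac4)
  finally show "\<exists>b. II b \<and> beq (Add x x') (Add (Add y y') b)" using * by (intro exI[of _ "Add b b'"]) (auto intro: inB1.add)
qed

lemma cg_mul_r: "cg x y \<Longrightarrow> wf_bexp n t \<Longrightarrow> cg (Mul x t) (Mul y t)"
  unfolding cg_def
proof (elim exE conjE)
  fix b assume *: "II b" "beq x (Add y b)" and t: "wf_bexp n t"
  have "beq (Mul x t) (Mul (Add y b) t)" by (rule cml, fact)
  also have "beq \<dots> (Add (Mul y t) (Mul b t))" by (rule bmw_eq.distrib_r)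
  finally show "\<exists>b. II b \<and> beq (Mul x t) (Add (Mul y t) b)" using * t by (intro exI[of _ "Mul b t"]) (auto intro: I_right)
qed

lemma cg_mul_l: "cg x y \<Longrightarrow> wf_bexp n t \<Longrightarrow> cg (Mul t x) (Mul t y)"
  unfolding cg_def
proof (elim exE conjE)
  fix b assume *: "II b" "beq x (Add y b)" and t: "wf_bexp n t"
  have "beq (Mul t x) (Mul t (Add y b))" by (rule cmr, fact)
  also have "beq \<dots> (Add (Mul t y) (Mul t b))" by (rule bmw_eq.distrib_l)
  finally show "\<exists>b. II b \<and> beq (Mul t x) (Add (Mul t y) b)" using * t by (intro exI[of _ "Mul t b"]) (auto intro: I_left)
qed

lemma cg_I: "II b \<Longrightarrow> cg b (Sc 0)"
  unfolding cg_def by (rule exI[of _ b], rule conjI, assumption, rule bs, rule bmw_eq.add_zero)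

lemma cg_zero_I: "cg x (Sc 0) \<Longrightarrow> II x"
  unfolding cg_def by (elim exE conjE, erule inB1.resp, rule bs, erule bt, rule bmw_eq.add_zero)


lemma cg_sym: "cg x y \<Longrightarrow> cg y x"
  unfolding cg_def
proof (elim exE conjE)
  fix b assume *: "II b" "beq x (Add y b)"
  have "beq (Add x (Mul (Sc (-1)) b)) (Add (Add y b) (Mul (Sc (-1)) b))" by (rule cal, fact)
  also have "beq \<dots> (Add y (Sub b b))" by (rule bmw_eq.add_assoc)
  also have "beq \<dots> (Add y (Sc 0))" by (rule car, rule bmw_eq.add_neg)
  also have "beq \<dots> y" by (rule add_zero_r)
  finally have "beq y (Add x (Mul (Sc (-1)) b))" by (rule bs)
  moreover have "II (Mul (Sc (-1)) b)" by (rule I_left) (use * in auto)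
  ultimately show "\<exists>b'. II b' \<and> beq y (Add x b')" by blast
qed

fun tw :: "nat list \<Rightarrow> 'k bexp" where
  "tw [] = Sc 1" | "tw (i # is) = Mul (G (T i)) (tw is)"

definition okw :: "nat list \<Rightarrow> bool" where "okw u \<longleftrightarrow> (\<forall>i\<in>set u. 1 \<le> i \<and> i < n)"

lemma okw_simps[simp]: "okw [] = True" "okw (i#u) = (1 \<le> i \<and> i < n \<and> okw u)" "okw (u @ v) = (okw u \<and> okw v)"
  by (auto simp: okw_def)

lemma wf_tw: "okw u \<Longrightarrow> wf_bexp n (tw u)"
  by (induction u) auto

lemma tw_app: "beq (tw (xs @ ys)) (Mul (tw xs) (tw ys))"
proof (induction xs)
  case Nil show ?case by (simp, rule bs, rule bmw_eq.mul_one_l)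
next
  case (Cons x xs)
  have "beq (tw ((x#xs) @ ys)) (Mul (G (T x)) (Mul (tw xs) (tw ys)))" by (simp, rule cmr, rule Cons)
  also have "beq \<dots> (Mul (tw (x#xs)) (tw ys))" by (simp, rule bs, rule bmw_eq.mul_assoc)
  finally show ?case .
qed

lemma tw_ctx: "beq (tw u) (tw v) \<Longrightarrow> beq (tw (p @ u @ q)) (tw (p @ v @ q))"
proof -
  assume uv: "beq (tw u) (tw v)"
  have "beq (tw (p @ u @ q)) (Mul (tw p) (Mul (tw u) (tw q)))" by (rule bt, rule tw_app, rule cmr, rule tw_app)
  also have "beq \<dots> (Mul (tw p) (Mul (tw v) (tw q)))" by (rule cmr, rule cml, rule uv)
  also have "beq \<dots> (tw (p @ v @ q))" by (rule bs, rule bt, rule tw_app, rule cmr, rule tw_app)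
  finally show ?thesis .
qed

lemma tw_single: "beq (tw [i]) (G (T i))" by (simp, rule bmw_eq.mul_one_r)

fun lc :: "('k \<times> 'a) list \<Rightarrow> ('a \<Rightarrow> 'k bexp) \<Rightarrow> 'k bexp" where
  "lc [] P = Sc 0" | "lc ((c,k) # L) P = Add (Mul (Sc c) (P k)) (lc L P)"

lemma wf_lc: "(\<And>k. k \<in> snd ` set L \<Longrightarrow> wf_bexp n (P k)) \<Longrightarrow> wf_bexp n (lc L P)"
  by (induction L) auto

lemma lc_app: "beq (lc (A @ B) P) (Add (lc A P) (lc B P))"
proof (induction A)
  case Nil show ?case by (simp, rule bs, rule bmw_eq.add_zero)
next
  case (Cons a A)
  obtain c k where a: "a = (c,k)" by force
  have "beq (lc ((a#A) @ B) P) (Add (Mul (Sc c) (P k)) (Add (lc A P) (lc B P)))" by (simp add: a, rule car, rule Cons)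
  also have "beq \<dots> (Add (lc (a#A) P) (lc B P))" by (simp add: a, rule bs, rule bmw_eq.add_assoc)
  finally show ?case .
qed

lemma mul_sc_sc: "beq (Mul (Sc c) (Mul (Sc d) x)) (Mul (Sc (c*d)) x)"
  by (rule bt, rule bs, rule bmw_eq.mul_assoc, rule cml, rule bmw_eq.sc_mul)

lemma lc_scale: "beq (Mul (Sc c) (lc L P)) (lc (map (\<lambda>(d,k). (c*d,k)) L) P)"
proof (induction L)
  case Nil show ?case by (simp, rule mul_zero)
next
  case (Cons a L)
  obtain d k where a: "a = (d,k)" by force
  have "beq (Mul (Sc c) (lc (a#L) P)) (Add (Mul (Sc c) (Mul (Sc d) (P k))) (Mul (Sc c) (lc L P)))"
    by (simp add: a, rule bmw_eq.distrib_l)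
  also have "beq \<dots> (lc (map (\<lambda>(d,k). (c*d,k)) (a#L)) P)"
    by (simp add: a, rule bmw_eq.cong_add, rule mul_sc_sc, rule Cons)
  finally show ?case .
qed

lemma lc_mulr: "beq (Mul (lc L P) t) (lc L (\<lambda>k. Mul (P k) t))"
proof (induction L)
  case Nil show ?case by (simp, rule zero_mul)
next
  case (Cons a L)
  obtain d k where a: "a = (d,k)" by force
  have "beq (Mul (lc (a#L) P) t) (Add (Mul (Mul (Sc d) (P k)) t) (Mul (lc L P) t))"
    by (simp add: a, rule bmw_eq.distrib_r)
  also have "beq \<dots> (lc (a#L) (\<lambda>k. Mul (P k) t))"
    by (simp add: a, rule bmw_eq.cong_add, rule bmw_eq.mul_assoc, rule Cons)
  finally show ?case .
qed

lemma lc_cong_beq: "(\<And>k. k \<in> snd ` set L \<Longrightarrow> beq (P k) (Q k)) \<Longrightarrow> beq (lc L P) (lc L Q)"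
proof (induction L)
  case Nil show ?case by (simp, rule br)
next
  case (Cons a L)
  obtain d k where a: "a = (d,k)" by force
  show ?case using Cons.prems by (simp add: a, intro bmw_eq.cong_add cmr Cons.IH) (auto simp: a)
qed

lemma lc_cong: "(\<And>k. k \<in> snd ` set L \<Longrightarrow> cg (P k) (Q k)) \<Longrightarrow> cg (lc L P) (lc L Q)"
proof (induction L)
  case Nil show ?case by (simp, rule cg_refl)
next
  case (Cons a L)
  obtain d k where a: "a = (d,k)" by force
  show ?case using Cons.prems by (simp add: a, intro cg_add cg_mul_l Cons.IH) (auto simp: a)
qed

definition scl :: "'k \<Rightarrow> ('k \<times> 'a) list \<Rightarrow> ('k \<times> 'a) list" where
  "scl c L = map (\<lambda>(d,k). (c*d,k)) L"

lemma lc_concat: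
  assumes "\<And>k. k \<in> snd ` set L \<Longrightarrow> cg (Q k) (lc (M k) P)"
  shows "cg (lc L Q) (lc (concat (map (\<lambda>(c,k). scl c (M k)) L)) P)"
  using assms
proof (induction L)
  case Nil show ?case by (simp, rule cg_refl)
next
  case (Cons a L)
  obtain c k where a: "a = (c,k)" by force
  have "cg (lc (a#L) Q) (Add (Mul (Sc c) (lc (M k) P)) (lc (concat (map (\<lambda>(c,k). scl c (M k)) L)) P))"
    using Cons.prems by (simp add: a, intro cg_add cg_mul_l Cons.IH) (auto simp: a)
  also have "beq \<dots> (Add (lc (scl c (M k)) P) (lc (concat (map (\<lambda>(c,k). scl c (M k)) L)) P))"
    unfolding scl_def by (rule cal, rule lc_scale)
  also have "beq \<dots> (lc (concat (map (\<lambda>(c,k). scl c (M k)) (a#L))) P)"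
    by (simp add: a, rule bs, rule lc_app)
  finally show ?case .
qed


section \<open>Hecke relations modulo B1\<close>

lemma E_in_I: "1 \<le> i \<Longrightarrow> i \<le> n - 1 \<Longrightarrow> II (G (E i))"
proof (induction i)
  case 0 then show ?case by simp
next
  case (Suc i)
  show ?case
  proof (cases "i = 0")
    case True
    have "II (Mul (Mul (Sc 1) (G (E 1))) (Sc 1))" by (rule inB1.gen) auto
    moreover have "beq (Mul (Mul (Sc 1) (G (E 1))) (Sc 1)) (G (E 1))" by (rule bt, rule bmw_eq.mul_one_r, rule bmw_eq.mul_one_l)
    ultimately show ?thesis using True by (auto intro: inB1.resp)
  next
    case False
    then have Ei: "II (G (E i))" using Suc by auto
    have "II (Mul (G (E (i+1))) (G (E i)))" by (rule I_left[OF Ei]) (use Suc in auto)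
    then have "II (Mul (Mul (G (E (i+1))) (G (E i))) (G (E (i+1))))" by (rule I_right) (use Suc in auto)
    moreover have "beq (Mul (Mul (G (E (i+1))) (G (E i))) (G (E (i+1)))) (G (E (i+1)))"
      by (rule bmw_eq.EEE2) (use Suc False in auto)
    ultimately show ?thesis by (auto intro: inB1.resp)
  qed
qed

abbreviation zz where "zz \<equiv> par_z \<zeta>"

lemma T_cg: assumes i: "1 \<le> i" "i \<le> n - 1"
  shows "cg (G (T i)) (Add (Sc zz) (G (Tinv i)))"
proof -
  have cgE: "cg (G (E i)) (Sc 0)" by (rule cg_I, rule E_in_I[OF i])
  have "cg (Sub (Sc 1) (G (E i))) (Add (Sc 1) (Mul (Sc (-1)) (Sc 0)))"
    by (rule cg_add, rule cg_refl, rule cg_mul_l[OF cgE], simp)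
  also have "beq \<dots> (Add (Sc 1) (Sc 0))" by (rule car, rule bt, rule bmw_eq.sc_mul, simp, rule br)
  also have "beq \<dots> (Sc 1)" by (rule add_zero_r)
  finally have c1: "cg (Sub (Sc 1) (G (E i))) (Sc 1)" .
  have "beq (Sub (G (T i)) (G (Tinv i))) (Mul (Sc zz) (Sub (Sc 1) (G (E i))))" by (rule bmw_eq.skein[OF i])
  also have "cg \<dots> (Mul (Sc zz) (Sc 1))" by (rule cg_mul_l[OF c1], simp)
  also have "beq \<dots> (Sc zz)" by (rule bt, rule bmw_eq.sc_mul, simp, rule br)
  finally have c3: "cg (Sub (G (T i)) (G (Tinv i))) (Sc zz)" .
  have "beq (Add (Sub (G (T i)) (G (Tinv i))) (G (Tinv i))) (Add (G (T i)) (Add (Mul (Sc (-1)) (G (Tinv i))) (G (Tinv i))))"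
    by (rule bmw_eq.add_assoc)
  also have "beq \<dots> (Add (G (T i)) (Sub (G (Tinv i)) (G (Tinv i))))" by (rule car, rule bmw_eq.add_comm)
  also have "beq \<dots> (Add (G (T i)) (Sc 0))" by (rule car, rule bmw_eq.add_neg)
  also have "beq \<dots> (G (T i))" by (rule add_zero_r)
  finally have c4: "beq (Add (Sub (G (T i)) (G (Tinv i))) (G (Tinv i))) (G (T i))" .
  have "beq (G (T i)) (Add (Sub (G (T i)) (G (Tinv i))) (G (Tinv i)))" by (rule bs, rule c4)
  also have "cg \<dots> (Add (Sc zz) (G (Tinv i)))" by (rule cg_add, rule c3, rule cg_refl)
  finally show ?thesis .
qed

lemma Tinv_cg: assumes i: "1 \<le> i" "i \<le> n - 1"
  shows "cg (G (Tinv i)) (Add (Sc (- zz)) (G (T i)))"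
proof -
  have "cg (Add (Sc (- zz)) (G (T i))) (Add (Sc (- zz)) (Add (Sc zz) (G (Tinv i))))"
    by (rule cg_add, rule cg_refl, rule T_cg[OF i])
  also have "beq \<dots> (Add (Add (Sc (- zz)) (Sc zz)) (G (Tinv i)))" by (rule bs, rule bmw_eq.add_assoc)
  also have "beq \<dots> (Add (Sc 0) (G (Tinv i)))" by (rule cal, rule bt, rule bmw_eq.sc_add, simp, rule br)
  also have "beq \<dots> (G (Tinv i))" by (rule bmw_eq.add_zero)
  finally show ?thesis by (rule cg_sym)
qed

lemma quad: assumes i: "1 \<le> i" "i \<le> n - 1"
  shows "cg (Mul (G (T i)) (G (T i))) (Add (Mul (Sc zz) (G (T i))) (Sc 1))"
proof -
  have "cg (Mul (G (T i)) (G (T i))) (Mul (G (T i)) (Add (Sc zz) (G (Tinv i))))"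
    by (rule cg_mul_l, rule T_cg[OF i]) (use i in simp)
  also have "beq \<dots> (Add (Mul (G (T i)) (Sc zz)) (Mul (G (T i)) (G (Tinv i))))" by (rule bmw_eq.distrib_l)
  also have "beq \<dots> (Add (Mul (Sc zz) (G (T i))) (Sc 1))"
    by (rule bmw_eq.cong_add, rule bs, rule bmw_eq.sc_central, rule bmw_eq.inv_l[OF i])
  finally show ?thesis .
qed

lemma tw2: "beq (tw [a,b]) (Mul (G (T a)) (G (T b)))"
  by (simp, rule cmr, rule bmw_eq.mul_one_r)

lemma tw3: "beq (tw [a,b,c]) (Mul (Mul (G (T a)) (G (T b))) (G (T c)))"
  by (simp, rule bt, rule cmr, rule cmr, rule bmw_eq.mul_one_r, rule bs, rule bmw_eq.mul_assoc)

lemma tw_ctx': "X = p @ u @ q \<Longrightarrow> Y = p @ v @ q \<Longrightarrow> beq (tw u) (tw v) \<Longrightarrow> beq (tw X) (tw Y)"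
  using tw_ctx by auto

definition far :: "nat \<Rightarrow> nat \<Rightarrow> bool" where "far a b \<longleftrightarrow> a + 1 < b \<or> b + 1 < a"

lemma comm_past: "(\<forall>b\<in>set B. far a b) \<Longrightarrow> okw (a # B) \<Longrightarrow> beq (tw (B @ [a])) (tw (a # B))"
proof (induction B)
  case Nil show ?case by (simp, rule br)
next
  case (Cons b B)
  have "beq (tw ((b # B) @ [a])) (tw ([b] @ (a # B) @ []))"
    apply (rule tw_ctx'[of _ "[b]" "B @ [a]" "[]" _ "a # B"])
    apply simp
    apply simp
    apply (rule Cons.IH)
    using Cons.prems by auto
  also have "beq \<dots> (tw ([] @ [a,b] @ B))"
  proof (rule tw_ctx'[of _ "[]" "[b,a]" B _ "[a,b]"], simp, simp)
    have ab: "1 \<le> a" "a \<le> n - 1" "1 \<le> b" "b \<le> n - 1" "a + 1 < b \<or> b + 1 < a" using Cons.prems by (auto simp: far_def)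
    show "beq (tw [b, a]) (tw [a, b])"
      by (rule bt, rule tw2, rule bt, rule bmw_eq.far_comm, (use ab in auto)[5], rule bs, rule tw2)
  qed
  finally show ?case by simp
qed

lemma braid_tw: "1 \<le> i \<Longrightarrow> i + 1 \<le> n - 1 \<Longrightarrow> beq (tw [i, i+1, i]) (tw [i+1, i, i+1])"
  by (rule bt, rule tw3, rule bt, rule bmw_eq.braid, assumption, assumption, rule bs, rule tw3)

lemma quad_tw: assumes "okw p" "1 \<le> i" "i \<le> n - 1"
  shows "cg (tw (p @ [i,i])) (Add (Mul (Sc zz) (tw (p @ [i]))) (tw p))"
proof -
  have wp: "wf_bexp n (tw p)" by (rule wf_tw, fact)
  have "beq (tw (p @ [i,i])) (Mul (tw p) (Mul (G (T i)) (G (T i))))" by (rule bt, rule tw_app, rule cmr, rule tw2)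
  also have "cg \<dots> (Mul (tw p) (Add (Mul (Sc zz) (G (T i))) (Sc 1)))" by (rule cg_mul_l[OF quad wp], fact, fact)
  also have "beq \<dots> (Add (Mul (tw p) (Mul (Sc zz) (G (T i)))) (Mul (tw p) (Sc 1)))" by (rule bmw_eq.distrib_l)
  also have "beq \<dots> (Add (Mul (Sc zz) (tw (p @ [i]))) (tw p))"
  proof (rule bmw_eq.cong_add)
    show "beq (Mul (tw p) (Sc 1)) (tw p)" by (rule bmw_eq.mul_one_r)
    have "beq (Mul (tw p) (Mul (Sc zz) (G (T i)))) (Mul (Mul (tw p) (Sc zz)) (G (T i)))" by (rule bs, rule bmw_eq.mul_assoc)
    also have "beq \<dots> (Mul (Mul (Sc zz) (tw p)) (G (T i)))" by (rule cml, rule bs, rule bmw_eq.sc_central)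
    also have "beq \<dots> (Mul (Sc zz) (Mul (tw p) (G (T i))))" by (rule bmw_eq.mul_assoc)
    also have "beq \<dots> (Mul (Sc zz) (tw (p @ [i])))" by (rule cmr, rule bs, rule bt, rule tw_app, rule cmr, rule tw_single)
    finally show "beq (Mul (tw p) (Mul (Sc zz) (G (T i)))) (Mul (Sc zz) (tw (p @ [i])))" .
  qed
  finally show ?thesis .
qed


section \<open>normal forms\<close>

definition dw :: "nat \<Rightarrow> nat \<Rightarrow> nat list" where "dw j s = rev [j - s..<j]"

fun pw :: "nat list \<Rightarrow> nat list" where
  "pw [] = []" | "pw (s # ss) = pw ss @ dw (length ss + 2) s"

fun vld :: "nat list \<Rightarrow> bool" where
  "vld [] = True" | "vld (s # ss) = (s \<le> length ss + 1 \<and> vld ss)"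

abbreviation PP where "PP ss \<equiv> tw (pw ss)"

lemma set_pw: "vld ss \<Longrightarrow> x \<in> set (pw ss) \<Longrightarrow> 1 \<le> x \<and> x \<le> length ss"
  by (induction ss) (auto simp: dw_def)

lemma okw_pw: "vld ss \<Longrightarrow> length ss \<le> n - 1 \<Longrightarrow> okw (pw ss)"
  using set_pw unfolding okw_def by fastforce

lemma lc_map: "lc (map (\<lambda>(c,k). (c, f k)) M) P = lc M (\<lambda>k. P (f k))"
  by (induction M) auto

lemma upt_split: "a \<le> b \<Longrightarrow> b \<le> c \<Longrightarrow> [a..<c] = [a..<b] @ [b..<c]"
  by (metis upt_add_eq_append le_add_diff_inverse)

lemma WI: assumes "1 \<le> k" "k < i" "i < j" "j \<le> n"
  shows "beq (tw (rev [k..<j] @ [i])) (tw ((i-1) # rev [k..<j]))"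
proof -
  define A where "A = rev [i+1..<j]"
  define B where "B = rev [k..<i-1]"
  have "[k..<j] = [k..<i-1] @ [i-1..<i+1] @ [i+1..<j]"
  proof -
    have "[k..<j] = [k..<i-1] @ [i-1..<j]" by (rule upt_split) (use assms in auto)
    moreover have "[i-1..<j] = [i-1..<i+1] @ [i+1..<j]" by (rule upt_split) (use assms in auto)
    ultimately show ?thesis by simp
  qed
  moreover have "[i-1..<i+1] = [i-1, i]" using assms by (cases i) (auto simp: upt_rec)
  ultimately have rk: "rev [k..<j] = A @ [i, i-1] @ B" by (simp add: A_def B_def)
  have oA: "okw A" and oB: "okw B" using assms by (auto simp: okw_def A_def B_def)
  have "beq (tw (rev [k..<j] @ [i])) (tw ((A @ [i, i-1]) @ (i # B) @ []))"
    apply (rule tw_ctx'[of _ "A @ [i, i-1]" "B @ [i]" "[]" _ "i # B"])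
    apply (simp add: rk) apply simp
    apply (rule comm_past) using assms oB by (auto simp: far_def B_def)
  also have "beq \<dots> (tw (A @ [i-1, i, i-1] @ B))"
  proof (rule tw_ctx'[of _ A "[i, i-1, i]" B _ "[i-1, i, i-1]"], simp, simp)
    have F: "beq (tw [i-1, i-1+1, i-1]) (tw [i-1+1, i-1, i-1+1])" by (rule braid_tw) (use assms in auto)
    have eq: "i - 1 + 1 = i" using assms by simp
    show "beq (tw [i, i-1, i]) (tw [i-1, i, i-1])" by (rule bs[OF F[unfolded eq]])
  qed
  also have "beq \<dots> (tw ([] @ ((i-1) # A) @ ([i, i-1] @ B)))"
    apply (rule tw_ctx'[of _ "[]" "A @ [i-1]" "[i, i-1] @ B" _ "(i-1) # A"])
    apply simp apply simp
    apply (rule comm_past) using assms oA by (auto simp: far_def A_def)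
  finally show ?thesis by (simp add: rk)
qed


lemma okw_dw: "s \<le> L + 1 \<Longrightarrow> L + 1 \<le> n - 1 \<Longrightarrow> okw (dw (L + 2) s)"
  unfolding okw_def dw_def by auto

lemma Hlem: assumes v: "vld (s#ss0)" "length (s#ss0) \<le> n - 1"
  and M0: "\<forall>x\<in>set M0. vld (snd x) \<and> length (snd x) = length ss0"
  and c: "cg (tw (pw ss0 @ [i'])) (lc M0 PP)"
  shows "cg (tw (pw ss0 @ [i'] @ dw (length ss0 + 2) s)) (lc (map (\<lambda>(c,k). (c, s#k)) M0) PP)"
proof -
  define D where "D = dw (length ss0 + 2) s"
  have okD: "okw D" unfolding D_def by (rule okw_dw) (use v in auto)
  have "beq (tw (pw ss0 @ [i'] @ D)) (Mul (tw (pw ss0 @ [i'])) (tw D))" using tw_app[of "pw ss0 @ [i']" D] by simp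
  also have "cg \<dots> (Mul (lc M0 PP) (tw D))" by (rule cg_mul_r[OF c wf_tw[OF okD]])
  also have "beq \<dots> (lc M0 (\<lambda>k. Mul (PP k) (tw D)))" by (rule lc_mulr)
  also have "beq \<dots> (lc M0 (\<lambda>k. PP (s#k)))"
  proof (rule lc_cong_beq)
    fix k assume "k \<in> snd ` set M0"
    then have "length k = length ss0" using M0 by auto
    then have e: "pw (s#k) = pw k @ D" by (simp add: D_def)
    show "beq (Mul (PP k) (tw D)) (PP (s#k))" unfolding e by (rule bs, rule tw_app)
  qed
  also have "lc M0 (\<lambda>k. PP (s#k)) = lc (map (\<lambda>(c,k). (c, s#k)) M0) PP" by (rule lc_map[symmetric])
  finally show ?thesis by (simp add: D_def)
qed

lemma lc_single: "beq (P k) (lc [(1, k)] P)"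
  by (simp, rule bs, rule bt, rule add_zero_r, rule bmw_eq.mul_one_l)

lemma clos: "vld ss \<Longrightarrow> length ss \<le> n - 1 \<Longrightarrow> 1 \<le> i \<Longrightarrow> i \<le> length ss \<Longrightarrow>
  \<exists>M. (\<forall>x\<in>set M. vld (snd x) \<and> length (snd x) = length ss) \<and> cg (tw (pw ss @ [i])) (lc M PP)"
proof (induction ss arbitrary: i)
  case Nil then show ?case by simp
next
  case (Cons s ss0)
  define j where "j = length ss0 + 2"
  have pwe: "pw (s#ss0) = pw ss0 @ dw j s" by (simp add: j_def)
  have sj: "s \<le> j - 1" and ij: "i \<le> j - 1" and jn: "j \<le> n" and v0: "vld ss0"
    using Cons.prems by (auto simp: j_def)
  have ok0: "okw (pw ss0)" by (rule okw_pw) (use Cons.prems in auto)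
  consider (a) "i + 1 < j - s" | (b) "j - s = i + 1" | (c) "j - s = i" | (d) "j - s < i" by linarith
  then show ?case
  proof cases
    case a
    have "\<exists>M. (\<forall>x\<in>set M. vld (snd x) \<and> length (snd x) = length ss0) \<and> cg (tw (pw ss0 @ [i])) (lc M PP)"
      by (rule Cons.IH) (use Cons.prems a in \<open>auto simp: j_def\<close>)
    then obtain M0 where M0: "\<forall>x\<in>set M0. vld (snd x) \<and> length (snd x) = length ss0" "cg (tw (pw ss0 @ [i])) (lc M0 PP)"
      by blast
    have "beq (tw (pw (s#ss0) @ [i])) (tw (pw ss0 @ (i # dw j s) @ []))"
      apply (rule tw_ctx'[of _ "pw ss0" "dw j s @ [i]" "[]" _ "i # dw j s"])
      apply (simp add: j_def) apply simp
      apply (rule comm_past) using a sj jn Cons.prems by (auto simp: far_def dw_def okw_def)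
    also have "cg \<dots> (lc (map (\<lambda>(c,k). (c, s#k)) M0) PP)"
      using Hlem[OF Cons.prems(1,2) M0] by (simp add: j_def)
    finally show ?thesis using M0(1) Cons.prems(1) by (intro exI[of _ "map (\<lambda>(c,k). (c, s#k)) M0"] conjI) auto
  next
    case b
    have "pw (s#ss0) @ [i] = pw ((s+1)#ss0)"
    proof -
      have e1: "j - s = i + 1" and e2: "j - (s + 1) = i" using b by linarith+
      have u: "[i..<j] = i # [i+1..<j]" using ij b by (simp add: upt_conv_Cons)
      have "pw (s#ss0) @ [i] = pw ss0 @ rev [i+1..<j] @ [i]" by (simp only: pwe dw_def e1 append_assoc)
      moreover have "pw ((s+1)#ss0) = pw ss0 @ dw j (s+1)" by (simp add: j_def)
      moreover have "dw j (s+1) = rev [i+1..<j] @ [i]" by (simp only: dw_def e2 u rev.simps)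
      ultimately show ?thesis by simp
    qed
    then have "beq (tw (pw (s#ss0) @ [i])) (lc [(1, (s+1)#ss0)] PP)" by (simp only:) (rule lc_single)
    then show ?thesis using Cons.prems b by (intro exI[of _ "[(1, (s+1)#ss0)]"] conjI cg_beq) (auto simp: j_def)
  next
    case c
    define pre where "pre = pw ss0 @ dw j (s-1)"
    have s1: "s \<ge> 1" using c ij unfolding j_def by linarith
    have e1: "pw (s#ss0) = pre @ [i]"
    proof -
      have ilj: "i < j" using ij unfolding j_def by linarith
      have u: "[i..<j] = i # [i+1..<j]" using ilj by (simp add: upt_conv_Cons)
      have e3: "j - (s - 1) = i + 1" using c s1 sj by linarith
      show ?thesis by (simp only: pwe pre_def dw_def e3 c u rev.simps append_assoc)
    qed
    have e2: "pw ((s-1)#ss0) = pre" by (simp add: pre_def j_def)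
    have okd: "okw (dw j (s-1))" unfolding j_def by (rule okw_dw) (use Cons.prems in auto)
    have okp: "okw pre" unfolding pre_def using ok0 okd by simp
    have "cg (tw (pw (s#ss0) @ [i])) (Add (Mul (Sc zz) (tw (pre @ [i]))) (tw pre))"
      unfolding e1 using quad_tw[OF okp, of i] Cons.prems jn ij by simp
    also have "beq \<dots> (lc [(zz, s#ss0), (1, (s-1)#ss0)] PP)"
      by (simp only: lc.simps e1 e2, rule car, rule bs, rule bt, rule add_zero_r, rule bmw_eq.mul_one_l)
    finally show ?thesis using Cons.prems s1 by (intro exI[of _ "[(zz, s#ss0), (1, (s-1)#ss0)]"] conjI) auto
  next
    case d
    have "\<exists>M. (\<forall>x\<in>set M. vld (snd x) \<and> length (snd x) = length ss0) \<and> cg (tw (pw ss0 @ [i-1])) (lc M PP)"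
      by (rule Cons.IH) (use Cons.prems d sj in \<open>auto simp: j_def\<close>)
    then obtain M0 where M0: "\<forall>x\<in>set M0. vld (snd x) \<and> length (snd x) = length ss0" "cg (tw (pw ss0 @ [i-1])) (lc M0 PP)"
      by blast
    have "beq (tw (pw (s#ss0) @ [i])) (tw (pw ss0 @ ((i-1) # dw j s) @ []))"
      apply (rule tw_ctx'[of _ "pw ss0" "dw j s @ [i]" "[]" _ "(i-1) # dw j s"])
      apply (simp add: j_def) apply simp
      unfolding dw_def apply (rule WI) using d sj jn ij by auto
    also have "cg \<dots> (lc (map (\<lambda>(c,k). (c, s#k)) M0) PP)"
      using Hlem[OF Cons.prems(1,2) M0] by (simp add: j_def)
    finally show ?thesis using M0(1) Cons.prems(1) by (intro exI[of _ "map (\<lambda>(c,k). (c, s#k)) M0"] conjI) auto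
  qed
qed


section \<open>spanning\<close>

definition VF :: "nat list \<Rightarrow> bool" where "VF k \<longleftrightarrow> vld k \<and> length k = n - 1"

definition SP :: "'k bexp \<Rightarrow> bool" where
  "SP X \<longleftrightarrow> (\<exists>L. (\<forall>x\<in>set L. VF (snd x)) \<and> cg X (lc L PP))"

lemma wf_PP: "VF k \<Longrightarrow> wf_bexp n (PP k)"
  by (rule wf_tw, rule okw_pw) (auto simp: VF_def)

lemma wf_lcPP: "\<forall>x\<in>set L. VF (snd x) \<Longrightarrow> wf_bexp n (lc L PP)"
  by (rule wf_lc, rule wf_PP) auto

lemma SP_cg: "cg X Y \<Longrightarrow> SP Y \<Longrightarrow> SP X"
  unfolding SP_def using cg_trans by blast

lemma SP_lc: "\<forall>x\<in>set L. VF (snd x) \<Longrightarrow> SP (lc L PP)"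
  unfolding SP_def using cg_refl by blast

lemma SP_add: "SP A \<Longrightarrow> SP B \<Longrightarrow> SP (Add A B)"
  unfolding SP_def
proof (elim exE conjE)
  fix LA LB assume a: "\<forall>x\<in>set LA. VF (snd x)" "cg A (lc LA PP)" and b: "\<forall>x\<in>set LB. VF (snd x)" "cg B (lc LB PP)"
  have "cg (Add A B) (Add (lc LA PP) (lc LB PP))" by (rule cg_add, fact, fact)
  also have "beq \<dots> (lc (LA @ LB) PP)" by (rule bs, rule lc_app)
  finally show "\<exists>L. (\<forall>x\<in>set L. VF (snd x)) \<and> cg (Add A B) (lc L PP)" using a b by (intro exI[of _ "LA @ LB"]) auto
qed

lemma SP_Sc: "SP X \<Longrightarrow> SP (Mul X (Sc c))"
  unfolding SP_def
proof (elim exE conjE)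
  fix L assume a: "\<forall>x\<in>set L. VF (snd x)" "cg X (lc L PP)"
  have "beq (Mul X (Sc c)) (Mul (Sc c) X)" by (rule bs, rule bmw_eq.sc_central)
  also have "cg \<dots> (Mul (Sc c) (lc L PP))" by (rule cg_mul_l, fact, simp)
  also have "beq \<dots> (lc (map (\<lambda>(d,k). (c*d,k)) L) PP)" by (rule lc_scale)
  finally show "\<exists>L. (\<forall>x\<in>set L. VF (snd x)) \<and> cg (Mul X (Sc c)) (lc L PP)" using a
    by (intro exI[of _ "map (\<lambda>(d,k). (c*d,k)) L"]) auto
qed

lemma SP_E: "SP X \<Longrightarrow> 1 \<le> i \<Longrightarrow> i \<le> n - 1 \<Longrightarrow> SP (Mul X (G (E i)))"
  unfolding SP_def
proof (elim exE conjE)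
  fix L assume a: "\<forall>x\<in>set L. VF (snd x)" "cg X (lc L PP)" and i: "1 \<le> i" "i \<le> n - 1"
  have "cg (Mul X (G (E i))) (Mul (lc L PP) (G (E i)))" by (rule cg_mul_r, fact) (use i in simp)
  also have "cg \<dots> (Sc 0)" by (rule cg_I, rule I_left, rule E_in_I[OF i], rule wf_lcPP[OF a(1)])
  finally show "\<exists>L. (\<forall>x\<in>set L. VF (snd x)) \<and> cg (Mul X (G (E i))) (lc L PP)"
    by (intro exI[of _ "[]"]) auto
qed

lemma SP_T: assumes "SP X" "1 \<le> i" "i \<le> n - 1" shows "SP (Mul X (G (T i)))"
proof -
  obtain L where a: "\<forall>x\<in>set L. VF (snd x)" "cg X (lc L PP)" using assms(1) unfolding SP_def by blast
  have "\<forall>k. \<exists>M. VF k \<longrightarrow> (\<forall>x\<in>set M. VF (snd x)) \<and> cg (tw (pw k @ [i])) (lc M PP)"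
  proof
    fix k show "\<exists>M. VF k \<longrightarrow> (\<forall>x\<in>set M. VF (snd x)) \<and> cg (tw (pw k @ [i])) (lc M PP)"
    proof (cases "VF k")
      case True
      then obtain M where "\<forall>x\<in>set M. vld (snd x) \<and> length (snd x) = length k" "cg (tw (pw k @ [i])) (lc M PP)"
        using clos[of k i] assms by (auto simp: VF_def)
      then show ?thesis using True by (intro exI[of _ M]) (auto simp: VF_def)
    qed auto
  qed
  then obtain Mf where Mf: "\<And>k. VF k \<Longrightarrow> (\<forall>x\<in>set (Mf k). VF (snd x)) \<and> cg (tw (pw k @ [i])) (lc (Mf k) PP)"
    by metis
  have "cg (Mul X (G (T i))) (Mul (lc L PP) (G (T i)))" by (rule cg_mul_r, fact a) (use assms in simp)
  also have "beq \<dots> (lc L (\<lambda>k. Mul (PP k) (G (T i))))" by (rule lc_mulr)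
  also have "beq \<dots> (lc L (\<lambda>k. tw (pw k @ [i])))"
    by (rule lc_cong_beq, rule bs, rule bt, rule tw_app, rule cmr, rule tw_single)
  also have "cg \<dots> (lc (concat (map (\<lambda>(c,k). scl c (Mf k)) L)) PP)"
    by (rule lc_concat) (use Mf a in force)
  finally have c: "cg (Mul X (G (T i))) (lc (concat (map (\<lambda>(c,k). scl c (Mf k)) L)) PP)" .
  have "\<forall>x\<in>set (concat (map (\<lambda>(c,k). scl c (Mf k)) L)). VF (snd x)"
    using Mf a(1) by (force simp: scl_def)
  then show ?thesis using c unfolding SP_def by blast
qed

lemma SP_Tinv: assumes "SP X" "1 \<le> i" "i \<le> n - 1" shows "SP (Mul X (G (Tinv i)))"
proof -
  obtain L where a: "\<forall>x\<in>set L. VF (snd x)" "cg X (lc L PP)" using assms(1) unfolding SP_def by blast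
  have "cg (Mul X (G (Tinv i))) (Mul (lc L PP) (G (Tinv i)))" by (rule cg_mul_r, fact a) (use assms in simp)
  also have "cg \<dots> (Mul (lc L PP) (Add (Sc (- zz)) (G (T i))))"
    by (rule cg_mul_l, rule Tinv_cg, fact, fact, rule wf_lcPP[OF a(1)])
  also have "beq \<dots> (Add (Mul (lc L PP) (Sc (- zz))) (Mul (lc L PP) (G (T i))))" by (rule bmw_eq.distrib_l)
  finally have c: "cg (Mul X (G (Tinv i))) (Add (Mul (lc L PP) (Sc (- zz))) (Mul (lc L PP) (G (T i))))" .
  have "SP (lc L PP)" by (rule SP_lc[OF a(1)])
  then have "SP (Add (Mul (lc L PP) (Sc (- zz))) (Mul (lc L PP) (G (T i))))"
    using assms by (intro SP_add SP_Sc SP_T) auto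
  then show ?thesis by (rule SP_cg[OF c])
qed

lemma SP_mul: "wf_bexp n y \<Longrightarrow> SP X \<Longrightarrow> SP (Mul X y)"
proof (induction y arbitrary: X)
  case (Sc c) then show ?case by (intro SP_Sc) auto
next
  case (G g) then show ?case by (cases g) (auto intro: SP_T SP_Tinv SP_E)
next
  case (Add a b)
  have "SP (Add (Mul X a) (Mul X b))" using Add by (intro SP_add) auto
  then show ?case by (rule SP_cg[OF cg_beq[OF bmw_eq.distrib_l]])
next
  case (Mul a b)
  have "SP (Mul (Mul X a) b)" using Mul by auto
  then show ?case by (rule SP_cg[OF cg_beq[OF bs[OF bmw_eq.mul_assoc]]])
qed

lemma pw_zero: "pw (replicate k 0) = []"
  by (induction k) (auto simp: dw_def)

lemma vld_zero: "vld (replicate k 0)"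
  by (induction k) auto

lemma SP_one: "SP (Sc 1)"
proof -
  have "beq (Sc 1) (lc [(1, replicate (n-1) 0)] PP)"
    using lc_single[of PP "replicate (n-1) 0"] by (simp add: pw_zero)
  then show ?thesis unfolding SP_def by (intro exI[of _ "[(1, replicate (n-1) 0)]"]) (auto simp: VF_def vld_zero intro: cg_beq)
qed

lemma SP_wf: "wf_bexp n x \<Longrightarrow> SP x"
  by (rule SP_cg[OF cg_beq[OF bs[OF bmw_eq.mul_one_l]] SP_mul[OF _ SP_one]])


section \<open>representation on good vectors\<close>

definition good :: "nat list \<Rightarrow> bool" where
  "good w \<longleftrightarrow> length w = n \<and> distinct w \<and> set w \<subseteq> {1..m}"

definition GV :: "(nat list \<Rightarrow> 'k) \<Rightarrow> bool" where
  "GV v \<longleftrightarrow> (\<forall>w. \<not> good w \<longrightarrow> v w = 0)"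

definition swp :: "nat \<Rightarrow> nat list \<Rightarrow> nat list" where
  "swp i w = w[i-1 := w!i, i := w!(i-1)]"

lemma good_tb: "good w \<Longrightarrow> w \<in> tbasis n m"
  unfolding good_def tbasis_def by auto

lemma good_swp: "1 \<le> i \<Longrightarrow> i < n \<Longrightarrow> length w = n \<Longrightarrow> good (swp i w) = good w"
  unfolding good_def swp_def by simp

lemma good_upd: assumes "good (w[i-1 := a, i := b])" "1 \<le> i" "i < length w"
  shows "1 \<le> a \<and> a \<le> m \<and> 1 \<le> b \<and> b \<le> m \<and> a \<noteq> b"
proof -
  let ?u = "w[i-1 := a, i := b]"
  have l: "length ?u = length w" by simp
  have ua: "?u ! (i-1) = a" using assms by (simp add: nth_list_update)
  have ub: "?u ! i = b" using assms by simp
  have i1: "i - 1 < length ?u" "i < length ?u" using assms by auto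
  have "a \<in> set ?u" using nth_mem[OF i1(1)] ua by simp
  moreover have "b \<in> set ?u" using nth_mem[OF i1(2)] ub by simp
  moreover have "a \<noteq> b"
  proof
    assume "a = b"
    then have "?u ! (i-1) = ?u ! i" using ua ub by simp
    moreover have "distinct ?u" using assms(1) unfolding good_def by simp
    ultimately have "i - 1 = i" using nth_eq_iff_index_eq i1 by blast
    then show False using assms(2) by simp
  qed
  ultimately show ?thesis using assms(1) unfolding good_def by auto
qed

lemma beta_val: assumes ab: "1 \<le> a" "a \<le> m" "1 \<le> b" "b \<le> m" "a \<noteq> b"
  shows "beta_c m \<zeta> c d a b = (if a = d \<and> b = c \<and> c \<noteq> d \<and> c \<noteq> pr m d then 1 else 0) + (if a = c \<and> b = d \<and> c < d then zz else 0)"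
proof -
  have p1: "pr m b \<noteq> a" "pr m a \<noteq> b" using ab by (auto simp: pr_def)
  show ?thesis unfolding beta_c_def
    by (cases "a = d"; cases "b = c"; cases "a = c"; cases "b = d") (use p1 ab in simp_all)
qed

lemma gamma_val: assumes ab: "1 \<le> a" "a \<le> m" "1 \<le> b" "b \<le> m" "a \<noteq> b"
  shows "gamma_c m \<zeta> c d a b = 0"
proof -
  have p1: "pr m b \<noteq> a" using ab by (auto simp: pr_def)
  show ?thesis unfolding gamma_c_def using p1 by simp
qed

lemma beta_point: assumes v: "GV v" and w: "length w = n" and i: "1 \<le> i" "i < n"
  shows "beta_c m \<zeta> (w!(i-1)) (w!i) a b * v (w[i-1:=a, i:=b]) =
    (if a = w!i \<and> b = w!(i-1) \<and> w!(i-1) \<noteq> w!i \<and> w!(i-1) \<noteq> pr m (w!i) then v (w[i-1:=a, i:=b]) else 0)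
  + (if a = w!(i-1) \<and> b = w!i \<and> w!(i-1) < w!i then zz * v (w[i-1:=a, i:=b]) else 0)"
proof (cases "good (w[i-1:=a, i:=b])")
  case False
  then have h: "v (w[i-1:=a, i:=b]) = 0" using v by (simp add: GV_def)
  show ?thesis by (simp only: h mult_zero_right if_cancel add.right_neutral)
next
  case True
  then have ab: "1 \<le> a \<and> a \<le> m \<and> 1 \<le> b \<and> b \<le> m \<and> a \<noteq> b" using good_upd i w by auto
  show ?thesis unfolding beta_val[of a b, OF ab[THEN conjunct1] ab[THEN conjunct2, THEN conjunct1] ab[THEN conjunct2, THEN conjunct2, THEN conjunct1] ab[THEN conjunct2, THEN conjunct2, THEN conjunct2, THEN conjunct1] ab[THEN conjunct2, THEN conjunct2, THEN conjunct2, THEN conjunct2]]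
    by (simp add: distrib_right)
qed

lemma gamma_point: assumes v: "GV v" and w: "length w = n" and i: "1 \<le> i" "i < n"
  shows "gamma_c m \<zeta> (w!(i-1)) (w!i) a b * v (w[i-1:=a, i:=b]) = 0"
proof (cases "good (w[i-1:=a, i:=b])")
  case False then show ?thesis using v by (simp add: GV_def)
next
  case True
  then have ab: "1 \<le> a \<and> a \<le> m \<and> 1 \<le> b \<and> b \<le> m \<and> a \<noteq> b" using good_upd i w by auto
  then show ?thesis using gamma_val[of a b] by simp
qed

lemma sum2_delta: "finite A \<Longrightarrow> finite B \<Longrightarrow>
  (\<Sum>a\<in>A. \<Sum>b\<in>B. (if a = d \<and> b = c \<and> P then V a b else 0)) = (if d \<in> A \<and> c \<in> B \<and> P then V d c else (0::'k))"
proof -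
  assume f: "finite A" "finite B"
  have "\<And>a. (\<Sum>b\<in>B. (if a = d \<and> b = c \<and> P then V a b else 0)) = (\<Sum>b\<in>B. if b = c then (if a = d \<and> P then V a c else 0) else (0::'k))"
    by (rule sum.cong) auto
  also have "\<And>a. (\<Sum>b\<in>B. if b = c then (if a = d \<and> P then V a c else 0) else (0::'k)) = (if c \<in> B then (if a = d \<and> P then V a c else 0) else 0)"
    using f by (simp add: sum.delta)
  finally have "\<And>a. (\<Sum>b\<in>B. (if a = d \<and> b = c \<and> P then V a b else 0)) = (if a = d then (if c \<in> B \<and> P then V a c else 0) else (0::'k))"
    by auto
  then show ?thesis using f by (simp add: sum.delta)
qed

lemma E_zero: assumes v: "GV v" and i: "1 \<le> i" "i < n"
  shows "gen_act n m \<zeta> (E i) v = (\<lambda>w. 0)"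
proof
  fix w
  show "gen_act n m \<zeta> (E i) v w = 0"
  proof (cases "w \<in> tbasis n m")
    case True
    then have "length w = n" by (simp add: tbasis_def)
    then have "(\<Sum>a\<in>{1..2*m}. \<Sum>b\<in>{1..2*m}. gamma_c m \<zeta> (w!(i-1)) (w!i) a b * v (w[i-1:=a, i:=b])) = 0"
      by (intro sum.neutral ballI gamma_point[OF v _ i])
    then show ?thesis using True by (simp add: two_site_def)
  qed (simp add: two_site_def)
qed

lemma T_formula: assumes v: "GV v" and i: "1 \<le> i" "i < n"
  shows "gen_act n m \<zeta> (T i) v w = (if good w then v (swp i w) + (if w!(i-1) < w!i then zz * v w else 0) else 0)"
proof (cases "w \<in> tbasis n m")
  case False
  then show ?thesis using good_tb by (auto simp: two_site_def)
next
  case True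
  then have w: "length w = n" and sw: "set w \<subseteq> {1..2*m}" by (auto simp: tbasis_def)
  have "w!(i-1) \<in> set w" "w!i \<in> set w" using i w by (auto intro!: nth_mem)
  then have cd: "w!(i-1) \<in> {1..2*m}" "w!i \<in> {1..2*m}" using sw by auto
  have "gen_act n m \<zeta> (T i) v w = (\<Sum>a\<in>{1..2*m}. \<Sum>b\<in>{1..2*m}. beta_c m \<zeta> (w!(i-1)) (w!i) a b * v (w[i-1:=a, i:=b]))"
    unfolding gen_act.simps two_site_def using True by (simp only: if_True)
  also have "\<dots> = (\<Sum>a\<in>{1..2*m}. \<Sum>b\<in>{1..2*m}.
      (if a = w!i \<and> b = w!(i-1) \<and> w!(i-1) \<noteq> w!i \<and> w!(i-1) \<noteq> pr m (w!i) then v (w[i-1:=a, i:=b]) else 0)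
    + (if a = w!(i-1) \<and> b = w!i \<and> w!(i-1) < w!i then zz * v (w[i-1:=a, i:=b]) else 0))"
    by (simp only: beta_point[OF v w i])
  also have "\<dots> = (if w!(i-1) \<noteq> w!i \<and> w!(i-1) \<noteq> pr m (w!i) then v (swp i w) else 0)
     + (if w!(i-1) < w!i then zz * v w else 0)"
    using cd by (simp add: sum.distrib sum2_delta swp_def)
  also have "\<dots> = (if good w then v (swp i w) + (if w!(i-1) < w!i then zz * v w else 0) else 0)"
  proof (cases "good w")
    case True
    then have "w!(i-1) \<noteq> w!i" using i w unfolding good_def by (simp add: nth_eq_iff_index_eq)
    moreover have "w!(i-1) \<in> set w" "w!i \<in> set w" using i w by (auto intro!: nth_mem)
    then have "w!(i-1) \<le> m" "w!i \<le> m" using True unfolding good_def by auto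
    ultimately show ?thesis using True by (auto simp: pr_def)
  next
    case False
    then have "v w = 0" "v (swp i w) = 0" using v good_swp[OF i w] by (auto simp: GV_def)
    then show ?thesis using False by simp
  qed
  finally show ?thesis .
qed

lemma Tinv_formula: assumes v: "GV v" and i: "1 \<le> i" "i < n"
  shows "gen_act n m \<zeta> (Tinv i) v w = gen_act n m \<zeta> (T i) v w - zz * v w"
  using E_zero[OF v i] by (simp add: fun_eq_iff)

lemma two_site_add: "two_site n m C i (\<lambda>w. v1 w + v2 w) w = two_site n m C i v1 w + two_site n m C i v2 w"
  by (simp add: two_site_def distrib_left sum.distrib)

lemma two_site_smult: "two_site n m C i (\<lambda>w. c * v w) w = c * two_site n m C i v w"
  by (simp add: two_site_def sum_distrib_left mult_ac)

lemma gen_act_add: "gen_act n m \<zeta> g (\<lambda>w. v1 w + v2 w) w = gen_act n m \<zeta> g v1 w + gen_act n m \<zeta> g v2 w"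
  by (cases g) (simp_all add: two_site_add algebra_simps)

lemma gen_act_smult: "gen_act n m \<zeta> g (\<lambda>w. c * v w) w = c * gen_act n m \<zeta> g v w"
  by (cases g) (simp_all add: two_site_smult algebra_simps)


lemma GV_T: "GV v \<Longrightarrow> 1 \<le> i \<Longrightarrow> i < n \<Longrightarrow> GV (gen_act n m \<zeta> (T i) v)"
  unfolding GV_def[of "gen_act n m \<zeta> (T i) v"] using T_formula by simp

lemma T_dec: assumes "GV v" "1 \<le> i" "i < n" "length pre = i - 1"
  shows "gen_act n m \<zeta> (T i) v (pre @ x # y # suf) = (if good (pre @ x # y # suf)
     then v (pre @ y # x # suf) + (if x < y then zz * v (pre @ x # y # suf) else 0) else 0)"
proof -
  have ii: "i = Suc (length pre)" using assms by simp
  have "swp i (pre @ x # y # suf) = pre @ y # x # suf"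
    unfolding swp_def ii by (simp add: nth_append list_update_append)
  moreover have "(pre @ x # y # suf) ! (i-1) = x" "(pre @ x # y # suf) ! i = y"
    unfolding ii by (simp_all add: nth_append)
  ultimately show ?thesis using T_formula[OF assms(1-3)] by simp
qed

lemma T_dec2: assumes "GV v" "1 \<le> i" "i + 1 < n" "length pre = i - 1"
  shows "gen_act n m \<zeta> (T (i+1)) v (pre @ x # y # t # suf) = (if good (pre @ x # y # t # suf)
     then v (pre @ x # t # y # suf) + (if y < t then zz * v (pre @ x # y # t # suf) else 0) else 0)"
  using T_dec[OF assms(1) _ assms(3), of "pre @ [x]" y t suf] assms by simp

lemma T_decj: assumes "GV v" "1 \<le> i" "i + 1 < j" "j < n" "length pre = i - 1" "length mid = j - i - 2"
  shows "gen_act n m \<zeta> (T j) v (pre @ x # y # mid @ s # t # suf) = (if good (pre @ x # y # mid @ s # t # suf)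
     then v (pre @ x # y # mid @ t # s # suf) + (if s < t then zz * v (pre @ x # y # mid @ s # t # suf) else 0) else 0)"
  using T_dec[OF assms(1) _ assms(4), of "pre @ x # y # mid" s t suf] assms by simp

lemma three_cons: "length xs \<ge> 3 \<Longrightarrow> \<exists>x y t s. xs = x # y # t # s"
  by (cases xs; cases "tl xs"; cases "tl (tl xs)") auto

lemma two_cons: "length xs \<ge> 2 \<Longrightarrow> \<exists>x y s. xs = x # y # s"
  by (cases xs; cases "tl xs") auto

lemma dec2: assumes "length w = n" "1 \<le> i" "i < n"
  shows "\<exists>pre x y suf. w = pre @ x # y # suf \<and> length pre = i - 1"
proof -
  have "length (drop (i-1) w) \<ge> 2" using assms by simp
  then obtain x y s where "drop (i-1) w = x # y # s" using two_cons[of "drop (i-1) w"] by blast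
  then have "w = take (i-1) w @ x # y # s" by (metis append_take_drop_id)
  then show ?thesis using assms by (intro exI[of _ "take (i-1) w"]) auto
qed

lemma dec3: assumes "length w = n" "1 \<le> i" "i + 1 < n"
  shows "\<exists>pre x y t suf. w = pre @ x # y # t # suf \<and> length pre = i - 1"
proof -
  have "length (drop (i-1) w) \<ge> 3" using assms by simp
  then obtain x y t s where "drop (i-1) w = x # y # t # s" using three_cons[of "drop (i-1) w"] by blast
  then have "w = take (i-1) w @ x # y # t # s" by (metis append_take_drop_id)
  then show ?thesis using assms by (intro exI[of _ "take (i-1) w"]) auto
qed

lemma decfar: assumes "length w = n" "1 \<le> i" "i + 1 < j" "j < n"
  shows "\<exists>pre x y mid s t suf. w = pre @ x # y # mid @ s # t # suf \<and> length pre = i - 1 \<and> length mid = j - i - 2"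
proof -
  have "length (drop (i-1) w) \<ge> 2" using assms by simp
  then obtain x y r where r: "drop (i-1) w = x # y # r" using two_cons[of "drop (i-1) w"] by blast
  have l1: "length (drop (i-1) w) = n - (i-1)" using assms by simp
  then have lr: "length r = n - i - 1" unfolding r using assms by simp
  have "length (drop (j-i-2) r) \<ge> 2" using assms lr by simp
  then obtain s t suf where r2: "drop (j-i-2) r = s # t # suf" using two_cons[of "drop (j-i-2) r"] by blast
  have "r = take (j-i-2) r @ s # t # suf" using r2 by (metis append_take_drop_id)
  moreover have "w = take (i-1) w @ x # y # r" using r by (metis append_take_drop_id)
  ultimately have "w = take (i-1) w @ x # y # take (j-i-2) r @ s # t # suf" by simp
  moreover have "length (take (i-1) w) = i - 1" "length (take (j-i-2) r) = j - i - 2" using assms lr by auto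
  ultimately show ?thesis by blast
qed

lemma good_perm3: "good (pre @ y # x # t # suf) = good (pre @ x # y # t # suf)"
  "good (pre @ x # t # y # suf) = good (pre @ x # y # t # suf)"
  "good (pre @ y # t # x # suf) = good (pre @ x # y # t # suf)"
  "good (pre @ t # x # y # suf) = good (pre @ x # y # t # suf)"
  "good (pre @ t # y # x # suf) = good (pre @ x # y # t # suf)"
  unfolding good_def by auto

lemma good_perm2: "good (pre @ y # x # suf) = good (pre @ x # y # suf)"
  unfolding good_def by auto

lemma good_permf: "good (pre @ y # x # mid @ s # t # suf) = good (pre @ x # y # mid @ s # t # suf)"
  "good (pre @ x # y # mid @ t # s # suf) = good (pre @ x # y # mid @ s # t # suf)"
  "good (pre @ y # x # mid @ t # s # suf) = good (pre @ x # y # mid @ s # t # suf)"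
  unfolding good_def by auto

lemma good_dist3: "good (pre @ x # y # t # suf) \<Longrightarrow> x \<noteq> y \<and> y \<noteq> t \<and> x \<noteq> t"
  unfolding good_def by auto

end

context Lc begin
lemma quad_rep: assumes v: "GV v" and i: "1 \<le> i" "i < n"
  shows "gen_act n m \<zeta> (T i) (gen_act n m \<zeta> (T i) v) w = zz * gen_act n m \<zeta> (T i) v w + v w"
proof (cases "good w")
  case False
  then show ?thesis using T_formula[OF v i] T_formula[OF GV_T[OF v i] i] v by (simp add: GV_def)
next
  case True
  then obtain pre x y suf where w: "w = pre @ x # y # suf" "length pre = i - 1" using dec2 i good_def by blast
  have xy: "x \<noteq> y" using True w unfolding good_def by auto
  have gw: "good (pre @ x # y # suf)" using True w by simp
  show ?thesis unfolding w(1) using gw xy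
    apply (simp only: T_dec[OF GV_T[OF v i] i w(2)] T_dec[OF v i w(2)])
    apply (simp add: good_perm2)
    done
qed

lemma braid_rep: assumes v: "GV v" and i: "1 \<le> i" "i + 1 < n"
  shows "gen_act n m \<zeta> (T i) (gen_act n m \<zeta> (T (i+1)) (gen_act n m \<zeta> (T i) v)) w
       = gen_act n m \<zeta> (T (i+1)) (gen_act n m \<zeta> (T i) (gen_act n m \<zeta> (T (i+1)) v)) w"
proof -
  have i1: "i < n" "1 \<le> i+1" "i + 1 < n" using i by auto
  have g1: "GV (gen_act n m \<zeta> (T i) v)" "GV (gen_act n m \<zeta> (T (i+1)) v)"
    using GV_T[OF v i(1) i1(1)] GV_T[OF v i1(2) i1(3)] by auto
  have g2: "GV (gen_act n m \<zeta> (T (i+1)) (gen_act n m \<zeta> (T i) v))" "GV (gen_act n m \<zeta> (T i) (gen_act n m \<zeta> (T (i+1)) v))"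
    using GV_T[OF g1(1) i1(2) i1(3)] GV_T[OF g1(2) i(1) i1(1)] by auto
  show ?thesis
  proof (cases "good w")
    case False
    then show ?thesis using T_formula[OF g2(1) i(1) i1(1)] T_formula[OF g2(2) i1(2,3)] by simp
  next
    case True
    then obtain pre x y t suf where w: "w = pre @ x # y # t # suf" "length pre = i - 1" using dec3 i good_def by blast
    have d: "x \<noteq> y \<and> y \<noteq> t \<and> x \<noteq> t" using good_dist3 True w by blast
    have gw: "good (pre @ x # y # t # suf)" using True w by simp
    note F = T_dec[OF v i(1) i1(1) w(2)] T_dec[OF g1(1) i(1) i1(1) w(2)] T_dec[OF g1(2) i(1) i1(1) w(2)]
      T_dec[OF g2(1) i(1) i1(1) w(2)] T_dec[OF g2(2) i(1) i1(1) w(2)]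
      T_dec2[OF v i w(2)] T_dec2[OF g1(1) i w(2)] T_dec2[OF g1(2) i w(2)] T_dec2[OF g2(1) i w(2)] T_dec2[OF g2(2) i w(2)]
    show ?thesis unfolding w(1) using gw d
      apply (simp only: F)
      apply (simp add: good_perm3)
      by (simp add: algebra_simps)
  qed
qed


lemma far_rep: assumes v: "GV v" and i: "1 \<le> i" "i + 1 < j" "j < n"
  shows "gen_act n m \<zeta> (T i) (gen_act n m \<zeta> (T j) v) w = gen_act n m \<zeta> (T j) (gen_act n m \<zeta> (T i) v) w"
proof -
  have i1: "i < n" "1 \<le> j" using i by auto
  have g1: "GV (gen_act n m \<zeta> (T i) v)" "GV (gen_act n m \<zeta> (T j) v)"
    using GV_T[OF v i(1) i1(1)] GV_T[OF v i1(2) i(3)] by auto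
  show ?thesis
  proof (cases "good w")
    case False
    then show ?thesis using T_formula[OF g1(1) i1(2) i(3)] T_formula[OF g1(2) i(1) i1(1)] by simp
  next
    case True
    then obtain pre x y mid s t suf where w: "w = pre @ x # y # mid @ s # t # suf" "length pre = i - 1" "length mid = j - i - 2"
      using decfar i good_def by blast
    have gw: "good (pre @ x # y # mid @ s # t # suf)" using True w by simp
    note F = T_dec[OF v i(1) i1(1) w(2)] T_dec[OF g1(1) i(1) i1(1) w(2)] T_dec[OF g1(2) i(1) i1(1) w(2)]
      T_decj[OF v i w(2,3)] T_decj[OF g1(1) i w(2,3)] T_decj[OF g1(2) i w(2,3)]
    show ?thesis unfolding w(1) using gw
      apply (simp only: F)
      by (simp add: good_permf algebra_simps)
  qed
qed

fun ev :: "'k bexp \<Rightarrow> (nat list \<Rightarrow> 'k) \<Rightarrow> (nat list \<Rightarrow> 'k)" where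
  "ev (Sc c) v = (\<lambda>w. c * v w)"
| "ev (G g) v = (if 1 \<le> gidx g \<and> gidx g \<le> n - 1 then gen_act n m \<zeta> g v else v)"
| "ev (Add a b) v = (\<lambda>w. ev a v w + ev b v w)"
| "ev (Mul a b) v = ev b (ev a v)"

lemma ev_act: "wf_bexp n x \<Longrightarrow> ev x v = act n m \<zeta> x v"
  by (induction x arbitrary: v) auto

lemma ev_add: "ev a (\<lambda>w. v1 w + v2 w) = (\<lambda>w. ev a v1 w + ev a v2 w)"
proof (induction a arbitrary: v1 v2)
  case (G g) then show ?case by (auto simp: gen_act_add fun_eq_iff)
next
  case (Mul a b) then show ?case by simp
qed (auto simp: algebra_simps)

lemma ev_smult: "ev a (\<lambda>w. c * v w) = (\<lambda>w. c * ev a v w)"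
proof (induction a arbitrary: v)
  case (G g) then show ?case by (auto simp: gen_act_smult fun_eq_iff)
next
  case (Add a b) then show ?case by (simp add: algebra_simps)
next
  case (Mul a b) then show ?case by simp
qed (auto simp: algebra_simps)

lemma ev_zero: "ev a (\<lambda>w. 0) = (\<lambda>w. 0)"
  using ev_smult[of a 0 "\<lambda>w. 0"] by simp

lemma ev_neg: "ev a (\<lambda>w. - v w) = (\<lambda>w. - ev a v w)"
  using ev_smult[of a "-1" v] by simp

lemma GV_gen: "GV v \<Longrightarrow> 1 \<le> gidx g \<Longrightarrow> gidx g \<le> n - 1 \<Longrightarrow> GV (gen_act n m \<zeta> g v)"
proof (cases g)
  case (T i)
  assume "GV v" "1 \<le> gidx g" "gidx g \<le> n - 1"
  then show ?thesis using GV_T[of v i] T by auto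
next
  case (Tinv i)
  assume a: "GV v" "1 \<le> gidx g" "gidx g \<le> n - 1"
  then have i: "1 \<le> i" "i < n" using Tinv by auto
  show ?thesis unfolding Tinv GV_def using Tinv_formula[OF a(1) i] GV_T[OF a(1) i] a(1) by (simp add: GV_def)
next
  case (E i)
  assume a: "GV v" "1 \<le> gidx g" "gidx g \<le> n - 1"
  then have i: "1 \<le> i" "i < n" using E by auto
  show ?thesis unfolding E using E_zero[OF a(1) i] by (simp add: GV_def)
qed

lemma GV_ev: "GV v \<Longrightarrow> GV (ev a v)"
proof (induction a arbitrary: v)
  case (Sc c) then show ?case by (simp add: GV_def)
next
  case (G g) then show ?case using GV_gen by auto
next
  case (Add a b) then show ?case by (simp add: GV_def)
next
  case (Mul a b) then show ?case by simp
qed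


lemma gen0: "gen_act n m \<zeta> g (\<lambda>w. 0) = (\<lambda>w. 0)"
  using gen_act_smult[of g 0 "\<lambda>w. 0"] by (simp add: fun_eq_iff)

lemma Ez: "GV v \<Longrightarrow> 1 \<le> i \<Longrightarrow> i \<le> n - 1 \<Longrightarrow> gen_act n m \<zeta> (E i) v = (\<lambda>w. 0)"
  by (rule E_zero) auto

lemma GVT: "GV v \<Longrightarrow> 1 \<le> i \<Longrightarrow> i \<le> n - 1 \<Longrightarrow> GV (gen_act n m \<zeta> (T i) v)"
  by (rule GV_T) auto

lemma Tinv_fun: "GV v \<Longrightarrow> 1 \<le> i \<Longrightarrow> i \<le> n - 1 \<Longrightarrow>
  gen_act n m \<zeta> (Tinv i) v = (\<lambda>w. gen_act n m \<zeta> (T i) v w + (- zz) * v w)"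
  using Tinv_formula[of v i] by (auto simp: fun_eq_iff)

lemma GV0: "GV (\<lambda>w. 0)" by (simp add: GV_def)

lemma gen_act_diff: "gen_act n m \<zeta> g (\<lambda>w. v1 w - c * v2 w) x = gen_act n m \<zeta> g v1 x - c * gen_act n m \<zeta> g v2 x"
  using gen_act_add[of g v1 "\<lambda>w. (-c) * v2 w" x] gen_act_smult[of g "-c" v2 x] by (simp del: gen_act.simps)

lemma gen_act_neg: "gen_act n m \<zeta> g (\<lambda>w. - v w) x = - gen_act n m \<zeta> g v x"
  using gen_act_smult[of g "-1" v x] by (simp del: gen_act.simps)

lemma ev_resp: "beq a b \<Longrightarrow> GV v \<Longrightarrow> ev a v = ev b v"
proof (induction arbitrary: v rule: bmw_eq.induct)
  case (cong_mul a a' b b')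
  then show ?case using GV_ev by simp
next
  case (distrib_r a b c) then show ?case by (simp add: ev_add)
next
  case (sc_central c a) then show ?case by (simp add: ev_smult)
next
  case (inv_l i)
  have i': "1 \<le> i" "i < n" using inv_l by auto
  show ?case using inv_l Tinv_fun[OF GVT[OF inv_l(3) inv_l(1,2)] inv_l(1,2)] quad_rep[OF inv_l(3) i']
    by (simp add: fun_eq_iff)
next
  case (inv_r i)
  have i': "1 \<le> i" "i < n" using inv_r by auto
  show ?case using inv_r quad_rep[OF inv_r(3) i']
    by (simp add: fun_eq_iff gen_act_diff Tinv_fun[OF inv_r(3) inv_r(1,2)] del: gen_act.simps)
next
  case (skein i)
  show ?case using skein
    by (simp add: fun_eq_iff algebra_simps gen_act_neg gen_act_smult Tinv_fun[OF skein(3) skein(1,2)] Ez[OF skein(3) skein(1,2)] del: gen_act.simps)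
next
  case (E_sq i)
  then show ?case by (simp add: gen0 fun_eq_iff gen_act_smult Ez[OF E_sq(3) E_sq(1,2)] del: gen_act.simps)
next
  case (braid i)
  have i': "1 \<le> i" "i + 1 < n" using braid by auto
  show ?case using braid braid_rep[OF braid(3) i'] by (simp add: fun_eq_iff)
next
  case (far_comm i j)
  show ?case
  proof (cases "i + 1 < j")
    case True
    then show ?thesis using far_comm far_rep[OF far_comm(6), of i j] by (simp add: fun_eq_iff)
  next
    case False
    then have "j + 1 < i" using far_comm by auto
    then show ?thesis using far_comm far_rep[OF far_comm(6), of j i] by (simp add: fun_eq_iff)
  qed
next
  case (EEE1 i) then show ?case by (simp add: gen0 fun_eq_iff Ez GVT del: gen_act.simps)
next
  case (EEE2 i) then show ?case by (simp add: gen0 fun_eq_iff Ez GVT del: gen_act.simps)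
next
  case (TTE1 i) then show ?case by (simp add: gen0 fun_eq_iff Ez GVT del: gen_act.simps)
next
  case (TTE2 i) then show ?case by (simp add: gen0 fun_eq_iff Ez GVT del: gen_act.simps)
next
  case (ET i) then show ?case by (simp add: gen0 fun_eq_iff gen_act_smult Ez GVT del: gen_act.simps)
next
  case (TE i) then show ?case by (simp add: gen0 fun_eq_iff gen_act_smult Ez GVT del: gen_act.simps)
next
  case (ETE1 i) then show ?case by (simp add: gen0 fun_eq_iff gen_act_smult Ez GVT del: gen_act.simps)
next
  case (ETE2 i) then show ?case by (simp add: gen0 fun_eq_iff gen_act_smult Ez GVT del: gen_act.simps)
qed (auto simp: fun_eq_iff algebra_simps ev_neg)


lemma ev_I: assumes n2: "2 \<le> n" shows "II b \<Longrightarrow> GV v \<Longrightarrow> ev b v = (\<lambda>w. 0)"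
proof (induction arbitrary: v rule: inB1.induct)
  case (gen a b)
  have "gen_act n m \<zeta> (E 1) (ev a v) = (\<lambda>w. 0)" by (rule Ez, rule GV_ev[OF gen(3)]) (use n2 in auto)
  moreover have "Suc 0 \<le> n - Suc 0" using n2 by simp
  ultimately show ?case by (simp add: ev_zero del: gen_act.simps)
next
  case (add a b) then show ?case by simp
next
  case (resp a b) then show ?case using ev_resp[OF bs[OF resp(2)]] by simp
qed

section \<open>triangularity\<close>

fun invs :: "nat list \<Rightarrow> nat" where
  "invs [] = 0" | "invs (a # w) = length (filter (\<lambda>y. y < a) w) + invs w"

lemma invs_swap: "x < y \<Longrightarrow> invs (pre @ y # x # suf) = invs (pre @ x # y # suf) + 1"
proof (induction pre)
  case Nil then show ?case by auto
next
  case (Cons a pre) then show ?case by auto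
qed

lemma swp_dec: "1 \<le> i \<Longrightarrow> length pre = i - 1 \<Longrightarrow> swp i (pre @ x # y # suf) = pre @ y # x # suf"
proof -
  assume "1 \<le> i" "length pre = i - 1"
  then have ii: "i = Suc (length pre)" by simp
  show ?thesis unfolding swp_def ii by (simp add: nth_append list_update_append)
qed

lemma nth_dec: "1 \<le> i \<Longrightarrow> length pre = i - 1 \<Longrightarrow> (pre @ x # y # suf) ! (i-1) = x \<and> (pre @ x # y # suf) ! i = y"
proof -
  assume "1 \<le> i" "length pre = i - 1"
  then have ii: "i = Suc (length pre)" by simp
  show ?thesis unfolding ii by (simp add: nth_append)
qed

definition TRI :: "nat list \<Rightarrow> (nat list \<Rightarrow> 'k) \<Rightarrow> bool" where
  "TRI u f \<longleftrightarrow> good u \<and> GV f \<and> f u = 1 \<and> (\<forall>w. w \<noteq> u \<longrightarrow> f w \<noteq> 0 \<longrightarrow> invs w < invs u)"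

lemma invs_swp_le: assumes "good w" "1 \<le> i" "i < n" shows "invs w \<le> invs (swp i w) + 1"
proof -
  obtain pre x y suf where w: "w = pre @ x # y # suf" "length pre = i - 1" using dec2 assms good_def by blast
  have "x \<noteq> y" using assms(1) w unfolding good_def by auto
  then show ?thesis unfolding w(1) swp_dec[OF assms(2) w(2)]
    using invs_swap[of x y pre suf] invs_swap[of y x pre suf] by (cases "x < y") auto
qed

lemma TRI_step: assumes tr: "TRI u f" and i: "1 \<le> i" "i < n" and asc: "u!(i-1) < u!i"
  shows "TRI (swp i u) (gen_act n m \<zeta> (T i) f)"
proof -
  have gu: "good u" and gf: "GV f" and fu: "f u = 1" and tri: "\<And>w. w \<noteq> u \<Longrightarrow> f w \<noteq> 0 \<Longrightarrow> invs w < invs u"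
    using tr unfolding TRI_def by auto
  obtain pre x y suf where u: "u = pre @ x # y # suf" "length pre = i - 1" using dec2 i gu good_def by blast
  have xy: "x < y" using asc nth_dec[OF i(1) u(2)] u(1) by simp
  have su: "swp i u = pre @ y # x # suf" using swp_dec[OF i(1) u(2)] u(1) by simp
  have ssu: "swp i (swp i u) = u" using su swp_dec[OF i(1) u(2)] u(1) by simp
  have inv1: "invs (swp i u) = invs u + 1" using su u(1) invs_swap[OF xy] by simp
  have gsu: "good (swp i u)" using good_swp[OF i] gu good_def by auto
  have nsu: "swp i u ! (i-1) = y" "swp i u ! i = x" using nth_dec[OF i(1) u(2)] su by auto
  have val: "gen_act n m \<zeta> (T i) f (swp i u) = 1"
    using T_formula[OF gf i, of "swp i u"] gsu ssu fu nsu xy by simp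
  have rest: "invs w < invs (swp i u)" if w: "w \<noteq> swp i u" "gen_act n m \<zeta> (T i) f w \<noteq> 0" for w
  proof -
    have gw: "good w" using w(2) T_formula[OF gf i, of w] by (auto split: if_splits)
    have lw: "length w = n" using gw good_def by auto
    have "f (swp i w) \<noteq> 0 \<or> f w \<noteq> 0" using w(2) T_formula[OF gf i, of w] by (auto split: if_splits)
    then show ?thesis
    proof
      assume a: "f (swp i w) \<noteq> 0"
      have "swp i w \<noteq> u"
      proof
        assume "swp i w = u"
        then have "swp i (swp i w) = swp i u" by simp
        moreover obtain p2 a2 b2 s2 where "w = p2 @ a2 # b2 # s2" "length p2 = i - 1" using dec2[OF lw i] by blast
        ultimately have "w = swp i u" using swp_dec[OF i(1)] by simp
        then show False using w(1) by simp
      qed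
      then have "invs (swp i w) < invs u" using tri a by blast
      then show ?thesis using invs_swp_le[OF gw i] inv1 by linarith
    next
      assume a: "f w \<noteq> 0"
      show ?thesis using tri[of w] a inv1 by (cases "w = u") auto
    qed
  qed
  show ?thesis unfolding TRI_def using gsu GV_T[OF gf i] val rest by blast
qed

fun sw_word :: "nat list \<Rightarrow> nat list \<Rightarrow> nat list" where
  "sw_word u [] = u" | "sw_word u (i # is) = sw_word (swp i u) is"

fun asc_path :: "nat list \<Rightarrow> nat list \<Rightarrow> bool" where
  "asc_path u [] = True" | "asc_path u (i # is) = (u!(i-1) < u!i \<and> asc_path (swp i u) is)"

lemma sw_word_app: "sw_word u (xs @ ys) = sw_word (sw_word u xs) ys"
  by (induction xs arbitrary: u) auto

lemma asc_path_app: "asc_path u (xs @ ys) = (asc_path u xs \<and> asc_path (sw_word u xs) ys)"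
  by (induction xs arbitrary: u) auto

lemma TRI_path: "TRI u f \<Longrightarrow> okw is \<Longrightarrow> asc_path u is \<Longrightarrow> TRI (sw_word u is) (ev (tw is) f)"
proof (induction "is" arbitrary: u f)
  case Nil then show ?case by (simp add: TRI_def)
next
  case (Cons i "is")
  have i: "1 \<le> i" "i < n" using Cons.prems by auto
  have "TRI (swp i u) (gen_act n m \<zeta> (T i) f)" by (rule TRI_step) (use Cons.prems i in auto)
  then have "TRI (sw_word (swp i u) is) (ev (tw is) (gen_act n m \<zeta> (T i) f))"
    by (rule Cons.IH) (use Cons.prems in auto)
  moreover have "i \<le> n - Suc 0" using i by simp
  ultimately show ?case using i by (simp del: gen_act.simps)
qed


lemma MOVE: "(\<forall>x\<in>set q. x < a) \<Longrightarrow> s \<le> length q \<Longrightarrow>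
  asc_path (q @ a # rest) (dw (length q + 1) s) \<and>
  sw_word (q @ a # rest) (dw (length q + 1) s) = take (length q - s) q @ a # drop (length q - s) q @ rest"
proof (induction s arbitrary: q rest)
  case 0 then show ?case by (simp add: dw_def)
next
  case (Suc s)
  then obtain q0 b where q: "q = q0 @ [b]" by (metis le_zero_eq list.size(3) nat.simps(3) rev_exhaust)
  let ?p = "length q0 + 1"
  have d: "dw (length q + 1) (Suc s) = ?p # dw (length q0 + 1) s"
  proof -
    have "[length q0 + 1 - s..<length q0 + 2] = [length q0 + 1 - s..<length q0 + 1] @ [length q0 + 1]"
      using Suc.prems q by simp
    then show ?thesis unfolding dw_def using q by simp
  qed
  have ba: "b < a" using Suc.prems q by simp
  have sw: "swp ?p (q0 @ b # a # rest) = q0 @ a # b # rest" by (rule swp_dec) auto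
  have nd: "(q0 @ b # a # rest) ! (?p - 1) = b \<and> (q0 @ b # a # rest) ! ?p = a" by (rule nth_dec) auto
  have IH: "asc_path (q0 @ a # b # rest) (dw (length q0 + 1) s) \<and>
    sw_word (q0 @ a # b # rest) (dw (length q0 + 1) s) = take (length q0 - s) q0 @ a # drop (length q0 - s) q0 @ b # rest"
    using Suc.IH[of q0 "b # rest"] Suc.prems q by simp
  have "q @ a # rest = q0 @ b # a # rest" using q by simp
  then show ?case unfolding d using IH sw nd ba q Suc.prems by simp
qed

abbreviation u0 where "u0 \<equiv> [1..<n+1]"

lemma LEAD: "vld k \<Longrightarrow> length k \<le> n - 1 \<Longrightarrow> 1 \<le> n \<Longrightarrow> \<exists>q. sw_word u0 (pw k) = q @ [length k + 2..<n+1] \<and> distinct q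
   \<and> set q = {1..<length k + 2} \<and> asc_path u0 (pw k)"
proof (induction k)
  case Nil
  have "[1..<n+1] = [1] @ [2..<n+1]" using Nil by (simp add: upt_conv_Cons numeral_2_eq_2)
  then show ?case by (intro exI[of _ "[1]"]) (auto simp: numeral_2_eq_2)
next
  case (Cons s k0)
  let ?L = "length k0"
  obtain q0 where q0: "sw_word u0 (pw k0) = q0 @ [?L + 2..<n+1]" "distinct q0" "set q0 = {1..<?L + 2}" "asc_path u0 (pw k0)"
    using Cons by auto
  have lq: "length q0 = ?L + 1" using q0(2,3) distinct_card by fastforce
  have R: "[?L + 2..<n+1] = (?L + 2) # [Suc (?L + 2)..<n+1]" using Cons.prems by (intro upt_conv_Cons) simp
  have all: "\<forall>x\<in>set q0. x < ?L + 2" using q0(3) by auto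
  have sl: "s \<le> length q0" using Cons.prems lq by simp
  have mv: "asc_path (q0 @ (?L + 2) # [Suc (?L + 2)..<n+1]) (dw (length q0 + 1) s) \<and>
    sw_word (q0 @ (?L + 2) # [Suc (?L + 2)..<n+1]) (dw (length q0 + 1) s) = take (length q0 - s) q0 @ (?L+2) # drop (length q0 - s) q0 @ [Suc (?L + 2)..<n+1]"
    by (rule MOVE[OF all sl])
  have pw: "pw (s # k0) = pw k0 @ dw (length q0 + 1) s" using lq by simp
  define q1 where "q1 = take (length q0 - s) q0 @ (?L+2) # drop (length q0 - s) q0"
  have "sw_word u0 (pw (s # k0)) = q1 @ [length (s#k0) + 2..<n+1]"
    unfolding pw sw_word_app q0(1) R using mv by (simp add: q1_def)
  moreover have "asc_path u0 (pw (s # k0))" unfolding pw asc_path_app q0(1) R using mv q0(4) by simp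
  define kk where "kk = length q0 - s"
  have dq: "distinct (take kk q0 @ drop kk q0)" using q0(2) by simp
  then have dd: "distinct (take kk q0)" "distinct (drop kk q0)" "set (take kk q0) \<inter> set (drop kk q0) = {}"
    by (simp_all only: distinct_append)
  have na: "?L + 2 \<notin> set (take kk q0)" "?L + 2 \<notin> set (drop kk q0)"
    using all set_take_subset[of kk q0] set_drop_subset[of kk q0] by auto
  have st: "set (take kk q0) \<union> set (drop kk q0) = set q0"
    by (metis append_take_drop_id set_append)
  moreover have "distinct q1" unfolding q1_def kk_def[symmetric] using dd na by auto
  moreover have "set q1 = {1..<length (s#k0) + 2}" unfolding q1_def kk_def[symmetric]
    using st q0(3) by auto
  ultimately show ?case using \<open>asc_path u0 (pw (s # k0))\<close> by blast
qed


lemma LEADstep: assumes "vld (s#k0)" "length (s#k0) \<le> n - 1"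
  and q0: "sw_word u0 (pw k0) = q0 @ [length k0 + 2..<n+1]" "distinct q0" "set q0 = {1..<length k0 + 2}"
  shows "sw_word u0 (pw (s # k0)) = take (length k0 + 1 - s) q0 @ (length k0 + 2) # drop (length k0 + 1 - s) q0 @ [Suc (length k0 + 2)..<n+1]"
    "length q0 = length k0 + 1" "s \<le> length k0 + 1"
proof -
  let ?L = "length k0"
  have lq: "length q0 = ?L + 1" using q0(2,3) distinct_card by fastforce
  have R: "[?L + 2..<n+1] = (?L + 2) # [Suc (?L + 2)..<n+1]" using assms by (intro upt_conv_Cons) simp
  have all: "\<forall>x\<in>set q0. x < ?L + 2" using q0(3) by auto
  have sl: "s \<le> length q0" using assms lq by simp
  have mv: "sw_word (q0 @ (?L + 2) # [Suc (?L + 2)..<n+1]) (dw (length q0 + 1) s) = take (length q0 - s) q0 @ (?L+2) # drop (length q0 - s) q0 @ [Suc (?L + 2)..<n+1]"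
    using MOVE[OF all sl] by blast
  have pw: "pw (s # k0) = pw k0 @ dw (length q0 + 1) s" using lq by simp
  show "sw_word u0 (pw (s # k0)) = take (?L + 1 - s) q0 @ (?L + 2) # drop (?L + 1 - s) q0 @ [Suc (?L + 2)..<n+1]"
    unfolding pw sw_word_app q0(1) R using mv lq by simp
  show "length q0 = ?L + 1" by (rule lq)
  show "s \<le> ?L + 1" using assms by simp
qed

lemma INJ: "vld k \<Longrightarrow> vld k' \<Longrightarrow> length k = length k' \<Longrightarrow> length k \<le> n - 1 \<Longrightarrow> 1 \<le> n \<Longrightarrow>
  sw_word u0 (pw k) = sw_word u0 (pw k') \<Longrightarrow> k = k'"
proof (induction k arbitrary: k')
  case Nil then show ?case by simp
next
  case (Cons s k0)
  then obtain s' k0' where k': "k' = s' # k0'" by (cases k') auto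
  have lk: "length k0' = length k0" using Cons.prems k' by simp
  obtain q0 where q0: "sw_word u0 (pw k0) = q0 @ [length k0 + 2..<n+1]" "distinct q0" "set q0 = {1..<length k0 + 2}"
    using LEAD[of k0] Cons.prems by auto
  obtain q0' where q0': "sw_word u0 (pw k0') = q0' @ [length k0 + 2..<n+1]" "distinct q0'" "set q0' = {1..<length k0 + 2}"
    using LEAD[of k0'] Cons.prems k' lk by auto
  note A = LEADstep[OF Cons.prems(1,4) q0]
  have v': "vld (s' # k0')" "length (s' # k0') \<le> n - 1" using Cons.prems k' by auto
  note B = LEADstep[OF v' q0'[unfolded lk[symmetric]], unfolded lk]
  let ?a = "length k0 + 2"
  let ?t = "take (length k0 + 1 - s) q0" and ?d = "drop (length k0 + 1 - s) q0"
  let ?t' = "take (length k0 + 1 - s') q0'" and ?d' = "drop (length k0 + 1 - s') q0'"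
  have eq: "?t @ ?a # ?d @ [Suc ?a..<n+1] = ?t' @ ?a # ?d' @ [Suc ?a..<n+1]"
    using Cons.prems(6) A(1) B(1) k' by simp
  have s1: "set ?t \<subseteq> {1..<?a}" "set ?d \<subseteq> {1..<?a}" "set ?t' \<subseteq> {1..<?a}"
    using q0(3) q0'(3) set_take_subset[of "length k0 + 1 - s" q0] set_drop_subset[of "length k0 + 1 - s" q0]
      set_take_subset[of "length k0 + 1 - s'" q0'] by auto
  have n1: "?a \<notin> set ?t" "?a \<notin> set (?d @ [Suc ?a..<n+1])" using s1 by auto
  have n2: "?a \<notin> set ?t'" using s1 by auto
  have tt: "?t = ?t'" and dd: "?d @ [Suc ?a..<n+1] = ?d' @ [Suc ?a..<n+1]"
    using iffD1[OF append_Cons_eq_iff[OF n1, of ?t' "?d' @ [Suc ?a..<n+1]"] eq] by auto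
  have "length ?t = length ?t'" using tt by simp
  then have ss: "s = s'" using A(2,3) B(2,3) by simp
  have dd2: "?d = ?d'" using dd by (rule append_same_eq[THEN iffD1])
  have "q0 = ?t @ ?d" by (rule append_take_drop_id[symmetric])
  also have "\<dots> = ?t' @ ?d'" using tt dd2 by (rule arg_cong2[where f = append])
  also have "\<dots> = q0'" by (rule append_take_drop_id)
  finally have "q0 = q0'" .
  then have "sw_word u0 (pw k0) = sw_word u0 (pw k0')" using q0(1) q0'(1) by simp
  moreover have "vld k0" "vld k0'" "length k0 = length k0'" "length k0 \<le> n - 1" using Cons.prems k' lk by auto
  ultimately have "k0 = k0'" using Cons.IH[of k0'] Cons.prems(5) by blast
  then show ?case using ss k' by simp
qed


definition FF :: "('k \<times> 'a) list \<Rightarrow> 'a \<Rightarrow> 'k" where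
  "FF L k = sum_list (map fst (filter (\<lambda>x. snd x = k) L))"

lemma FF_Cons: "FF ((c,k) # L) k' = (if k' = k then c else 0) + FF L k'"
  by (auto simp: FF_def)

lemma FF_notin: "k \<notin> set (map snd L) \<Longrightarrow> FF L k = 0"
proof -
  assume "k \<notin> set (map snd L)"
  then have "filter (\<lambda>x. snd x = k) L = []" by (auto simp: filter_empty_conv)
  then show ?thesis by (simp add: FF_def)
qed

lemma lc_part: "beq (lc L P) (Add (lc (filter Q L) P) (lc (filter (\<lambda>x. \<not> Q x) L) P))"
proof (induction L)
  case Nil show ?case by (simp, rule bs, rule bmw_eq.add_zero)
next
  case (Cons a L)
  obtain c k where a: "a = (c,k)" by force
  let ?x = "Mul (Sc c) (P k)"
  let ?A = "lc (filter Q L) P" and ?B = "lc (filter (\<lambda>x. \<not> Q x) L) P"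
  have "beq (lc (a#L) P) (Add ?x (Add ?A ?B))" by (simp add: a, rule car, rule Cons.IH)
  also have "beq \<dots> (Add (lc (filter Q (a#L)) P) (lc (filter (\<lambda>x. \<not> Q x) (a#L)) P))"
  proof (cases "Q a")
    case True
    then have Qa: "Q (c,k)" using a by simp
    show ?thesis by (simp add: a Qa, rule bs, rule bmw_eq.add_assoc)
  next
    case False
    have "beq (Add ?x (Add ?A ?B)) (Add (Add ?x ?A) ?B)" by (rule bs, rule bmw_eq.add_assoc)
    also have "beq \<dots> (Add (Add ?A ?x) ?B)" by (rule cal, rule bmw_eq.add_comm)
    also have "beq \<dots> (Add ?A (Add ?x ?B))" by (rule bmw_eq.add_assoc)
    finally show ?thesis using False by (simp add: a)
  qed
  finally show ?case .
qed

lemma lc_same: "(\<forall>x\<in>set A. snd x = k) \<Longrightarrow> beq (lc A P) (Mul (Sc (sum_list (map fst A))) (P k))"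
proof (induction A)
  case Nil show ?case by (simp, rule bs, rule zero_mul)
next
  case (Cons a A)
  obtain c k' where a: "a = (c,k')" by force
  have k': "k' = k" using Cons.prems a by auto
  have "beq (lc (a#A) P) (Add (Mul (Sc c) (P k)) (Mul (Sc (sum_list (map fst A))) (P k)))"
    using Cons by (simp add: a k', intro car) auto
  also have "beq \<dots> (Mul (Sc (c + sum_list (map fst A))) (P k))" by (rule sc_comb)
  finally show ?case by (simp add: a)
qed

lemma lc_zero: "(\<forall>k. FF L k = 0) \<Longrightarrow> beq (lc L P) (Sc 0)"
proof (induction "length L" arbitrary: L rule: less_induct)
  case less
  show ?case
  proof (cases L)
    case Nil show ?thesis unfolding Nil by (simp, rule br)
  next
    case (Cons a L')
    obtain c k where a: "a = (c,k)" by force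
    let ?A = "filter (\<lambda>x. snd x = k) L" and ?B = "filter (\<lambda>x. \<not> snd x = k) L"
    have "beq (lc L P) (Add (lc ?A P) (lc ?B P))" by (rule lc_part)
    also have "beq \<dots> (Add (Mul (Sc (FF L k)) (P k)) (Sc 0))"
    proof (rule bmw_eq.cong_add)
      show "beq (lc ?A P) (Mul (Sc (FF L k)) (P k))" unfolding FF_def by (rule lc_same) auto
      have "length ?B < length L" using Cons a by (simp add: le_imp_less_Suc)
      moreover have "\<forall>k'. FF ?B k' = 0"
      proof
        fix k'
        show "FF ?B k' = 0"
        proof (cases "k' = k")
          case True
          then have "filter (\<lambda>x. snd x = k') ?B = []" by (auto simp: filter_empty_conv)
          then show ?thesis by (simp add: FF_def)
        next
          case False
          then have "filter (\<lambda>x. snd x = k') ?B = filter (\<lambda>x. snd x = k') L" by (auto intro: filter_cong simp: filter_filter)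
          then show ?thesis using less.prems by (simp add: FF_def)
        qed
      qed
      ultimately show "beq (lc ?B P) (Sc 0)" using less.hyps by blast
    qed
    also have "beq \<dots> (Sc 0)"
    proof -
      have f0: "FF L k = 0" using less.prems by simp
      show ?thesis by (simp only: f0, rule bt, rule add_zero_r, rule zero_mul)
    qed
    finally show ?thesis .
  qed
qed

lemma ev_lc: "ev (lc L P) v w = sum_list (map (\<lambda>(c,k). c * ev (P k) v w) L)"
  by (induction L) (auto simp: ev_smult)

lemma sl_sum: "sum_list (map (\<lambda>(c,k). c * g k) L) = (\<Sum>k\<in>set (map snd L). FF L k * (g k :: 'k))"
proof (induction L)
  case Nil then show ?case by simp
next
  case (Cons a L)
  obtain c k where a: "a = (c,k)" by force
  let ?K = "set (map snd L)"
  have "(\<Sum>k'\<in>insert k ?K. FF ((c,k)#L) k' * g k') = (\<Sum>k'\<in>insert k ?K. (if k' = k then c * g k else 0) + FF L k' * g k')"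
    by (rule sum.cong) (auto simp: FF_Cons algebra_simps)
  also have "\<dots> = c * g k + (\<Sum>k'\<in>insert k ?K. FF L k' * g k')"
    by (simp add: sum.distrib sum.delta)
  also have "(\<Sum>k'\<in>insert k ?K. FF L k' * g k') = (\<Sum>k'\<in>?K. FF L k' * g k')"
    by (cases "k \<in> ?K") (auto simp: FF_notin insert_absorb)
  finally show ?case using Cons by (simp add: a)
qed

lemma coef0: assumes K: "finite K" and tr: "\<And>k. k \<in> K \<Longrightarrow> TRI (ld k) (f k)" and inj: "inj_on ld K"
  and z: "\<And>w. (\<Sum>k\<in>K. F k * f k w) = 0"
  shows "\<forall>k\<in>K. F k = (0::'k)"
proof (rule ccontr)
  assume "\<not> (\<forall>k\<in>K. F k = 0)"
  then have ne: "{k\<in>K. F k \<noteq> 0} \<noteq> {}" by auto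
  let ?S = "{k\<in>K. F k \<noteq> 0}"
  have fS: "finite ?S" using K by simp
  let ?M = "Max ((\<lambda>k. invs (ld k)) ` ?S)"
  have "?M \<in> (\<lambda>k. invs (ld k)) ` ?S" using fS ne by (intro Max_in) auto
  then obtain ks where ks: "ks \<in> ?S" "invs (ld ks) = ?M" by auto
  have le: "\<And>k. k \<in> ?S \<Longrightarrow> invs (ld k) \<le> invs (ld ks)" using ks fS by (simp add: Max_ge)
  have "(\<Sum>k\<in>K. F k * f k (ld ks)) = F ks * f ks (ld ks) + (\<Sum>k\<in>K - {ks}. F k * f k (ld ks))"
    using K ks by (intro sum.remove) auto
  also have "(\<Sum>k\<in>K - {ks}. F k * f k (ld ks)) = 0"
  proof (rule sum.neutral, rule ballI)
    fix k assume k: "k \<in> K - {ks}"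
    show "F k * f k (ld ks) = 0"
    proof (cases "F k = 0")
      case False
      then have kS: "k \<in> ?S" using k by auto
      have "ld k \<noteq> ld ks" using inj k ks(1) by (auto dest: inj_onD)
      moreover have "ld ks \<noteq> ld k \<longrightarrow> f k (ld ks) \<noteq> 0 \<longrightarrow> invs (ld ks) < invs (ld k)"
        using tr[of k] k unfolding TRI_def by auto
      ultimately have "f k (ld ks) = 0" using le[OF kS] by force
      then show ?thesis by simp
    qed simp
  qed
  finally have "F ks * f ks (ld ks) = 0" using z by simp
  moreover have "f ks (ld ks) = 1" using tr ks(1) unfolding TRI_def by auto
  ultimately show False using ks(1) by simp
qed


lemma main: assumes n2: "2 \<le> n" and nm: "n \<le> m" and wf: "wf_bexp n x" and ann: "in_Ann n m \<zeta> x"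
  shows "II x"
proof -
  obtain L where L: "\<forall>x\<in>set L. VF (snd x)" "cg x (lc L PP)" using SP_wf[OF wf] unfolding SP_def by blast
  then obtain b where b: "II b" "beq x (Add (lc L PP) b)" unfolding cg_def by blast
  define v0 where "v0 = (\<lambda>w. if w = u0 then 1 else (0::'k))"
  have gu0: "good u0" using nm unfolding good_def by auto
  have gv0: "GV v0" using gu0 unfolding GV_def v0_def by auto
  have tv0: "is_tvec n m v0" unfolding is_tvec_def v0_def using good_tb[OF gu0] by auto
  have TRI0: "TRI u0 v0" unfolding TRI_def using gu0 gv0 by (auto simp: v0_def)
  have "ev x v0 = act n m \<zeta> x v0" by (rule ev_act[OF wf])
  also have "\<dots> = (\<lambda>w. 0)" using ann tv0 unfolding in_Ann_def by auto
  finally have e0: "ev x v0 = (\<lambda>w. 0)" .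
  have "ev x v0 = ev (Add (lc L PP) b) v0" by (rule ev_resp[OF b(2) gv0])
  then have e1: "ev (lc L PP) v0 = (\<lambda>w. 0)" using e0 ev_I[OF n2 b(1) gv0] by (simp add: fun_eq_iff)
  define K where "K = set (map snd L)"
  have z: "(\<Sum>k\<in>K. FF L k * ev (PP k) v0 w) = 0" for w
    using e1 ev_lc[of L PP v0 w] sl_sum[of "\<lambda>k. ev (PP k) v0 w" L] unfolding K_def by (simp add: fun_eq_iff)
  have VK: "VF k" if "k \<in> K" for k using L(1) that unfolding K_def by auto
  have n1: "1 \<le> n" using n2 by simp
  have tr: "TRI (sw_word u0 (pw k)) (ev (PP k) v0)" if k: "k \<in> K" for k
  proof -
    have v: "vld k" "length k \<le> n - 1" using VK[OF k] unfolding VF_def by auto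
    have "asc_path u0 (pw k)" using LEAD[OF v n1] by blast
    then show ?thesis by (rule TRI_path[OF TRI0 okw_pw[OF v]])
  qed
  have inj: "inj_on (\<lambda>k. sw_word u0 (pw k)) K"
  proof (rule inj_onI)
    fix k k' assume kk: "k \<in> K" "k' \<in> K" "sw_word u0 (pw k) = sw_word u0 (pw k')"
    have a: "vld k" "vld k'" "length k = length k'" "length k \<le> n - 1"
      using VK[OF kk(1)] VK[OF kk(2)] unfolding VF_def by auto
    show "k = k'" by (rule INJ[OF a n1 kk(3)])
  qed
  have fK: "finite K" by (simp add: K_def)
  have "\<forall>k\<in>K. FF L k = 0"
    by (rule coef0[of K "\<lambda>k. sw_word u0 (pw k)" "\<lambda>k. ev (PP k) v0" "FF L", OF fK tr inj z])
  then have "\<forall>k. FF L k = 0"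
  proof (intro allI)
    fix k assume h: "\<forall>k\<in>K. FF L k = 0"
    show "FF L k = 0" proof (cases "k \<in> K")
      case True then show ?thesis using h by blast
    next
      case False then show ?thesis unfolding K_def by (rule FF_notin)
    qed
  qed
  then have "beq (lc L PP) (Sc 0)" by (rule lc_zero)
  then have "cg x (Sc 0)" by (rule cg_trans[OF L(2) cg_beq])
  then show ?thesis by (rule cg_zero_I)
qed

end

theorem lemma5p6:
  fixes \<zeta> :: "'k::field" and m n :: nat and x :: "'k bexp"
  assumes "\<zeta> \<noteq> 0" and "m \<ge> n" and "n \<ge> 2"
    and "wf_bexp n x" and "in_Ann n m \<zeta> x"
  shows "inB1 n m \<zeta> x"
  by (rule Lc.main) (use assms in auto)

end
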